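(* The relations $\equiv_{\tt CS}$ and $\equiv_{\tt o}$ are strong bisimulations for $(\mathcal T,\to_{\lambda j})$, where $\mathcal T$ is the set of $\lambda j$-terms.
   Context: $\lambda j$-terms are generated by $t,u::= x\mid \lambda x.t\mid t\,u\mid t[x/u]$ ($x$ ranging over variables); $\lambda x.t$ and $t[x/u]$ bind $x$ in $t$ (not in $u$), and terms are considered modulo $\alpha$-conversion. $\mathrm{fv}(t)$ is the set of free variables, $t\{x/u\}$ is capture-avoiding meta-level substitution, and $|t|_x$ is the number of free occurrences of $x$ in $t$. If $|t|_x=n\ge2$, $t_{[y]_x}$ denotes any term obtained from $t$ by replacing $k$ of the free occurrences of $x$ by a fresh variable $y$, for some $1\le k\le n-1$. ${\tt L}$ denotes a (possibly empty) list of jumps $[x_1/u_1]\dots[x_k/u_k]$. The rewriting rules, closed under all contexts, are: $({\tt dB})$ $(\lambda x.t){\tt L}\,u\to t[x/u]{\tt L}$ where no $x_i$ of ${\tt L}$ is free in $u$; $({\tt w})$ $t[x/u]\to t$ if $|t|_x=0$; $({\tt d})$ $t[x/u]\to t\{x/u\}$ if $|t|_x=1$; $({\tt c})$ $t[x/u]\to t_{[y]_x}[x/u][y/u]$ if $|t|_x\ge2$, $y$ fresh. $\to_{\lambda j}$ is the union of all four. $\equiv_{\tt CS}$ is the smallest equivalence closed under contexts containing $t[x/s][y/v]\sim t[y/v][x/s]$ whenever $x\notin\mathrm{fv}(v)$ and $y\notin\mathrm{fv}(s)$. $\equiv_{\tt o}$ (graphical equivalence) is the smallest equivalence closed under contexts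 containing that equation together with $\lambda y.(t[x/s])\sim(\lambda y.t)[x/s]$ if $y\notin\mathrm{fv}(s)$, and $t[x/s]\,v\sim(t\,v)[x/s]$ if $x\notin\mathrm{fv}(v)$. A strong bisimulation for a reduction system $(S,\to)$ is a relation ${\tt E}\subseteq S\times S$ such that whenever $s\,{\tt E}\,t$: if $s\to s'$ then there is $t'$ with $t\to t'$ and $s'\,{\tt E}\,t'$, and if $t\to t'$ then there is $s'$ with $s\to s'$ and $s'\,{\tt E}\,t'$. *)

theory Defs
  imports Main
begin

text \<open>lambda-j terms modulo alpha-conversion, represented with de Bruijn indices.
  Sub t u represents the jump t[x/u], where x is the index 0 bound in t (not in u).\<close>

datatype trm = Var nat | Lam trm | App trm trm | Sub trm trm

fun lift :: "nat \<Rightarrow> trm \<Rightarrow> trm" where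
  "lift k (Var i) = Var (if i < k then i else Suc i)"
| "lift k (Lam t) = Lam (lift (Suc k) t)"
| "lift k (App t u) = App (lift k t) (lift k u)"
| "lift k (Sub t u) = Sub (lift (Suc k) t) (lift k u)"

text \<open>Shift free indices > k down by one (used when k is not free).\<close>
fun down :: "nat \<Rightarrow> trm \<Rightarrow> trm" where
  "down k (Var i) = Var (if i < k then i else i - 1)"
| "down k (Lam t) = Lam (down (Suc k) t)"
| "down k (App t u) = App (down k t) (down k u)"
| "down k (Sub t u) = Sub (down (Suc k) t) (down k u)"

fun subst :: "nat \<Rightarrow> trm \<Rightarrow> trm \<Rightarrow> trm" where
  "subst k u (Var i) = (if i < k then Var i else if i = k then u else Var (i - 1))"
| "subst k u (Lam t) = Lam (subst (Suc k) (lift 0 u) t)"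
| "subst k u (App t s) = App (subst k u t) (subst k u s)"
| "subst k u (Sub t s) = Sub (subst (Suc k) (lift 0 u) t) (subst k u s)"

fun fv :: "trm \<Rightarrow> nat set" where
  "fv (Var i) = {i}"
| "fv (Lam t) = (\<lambda>i. i - 1) ` (fv t - {0})"
| "fv (App t u) = fv t \<union> fv u"
| "fv (Sub t u) = (\<lambda>i. i - 1) ` (fv t - {0}) \<union> fv u"

fun occ :: "nat \<Rightarrow> trm \<Rightarrow> nat" where
  "occ k (Var i) = (if i = k then 1 else 0)"
| "occ k (Lam t) = occ (Suc k) t"
| "occ k (App t u) = occ k t + occ k u"
| "occ k (Sub t u) = occ (Suc k) t + occ k u"

fun swap :: "nat \<Rightarrow> trm \<Rightarrow> trm" where
  "swap k (Var i) = Var (if i = k then Suc k else if i = Suc k then k else i)"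
| "swap k (Lam t) = Lam (swap (Suc k) t)"
| "swap k (App t u) = App (swap k t) (swap k u)"
| "swap k (Sub t u) = Sub (swap (Suc k) t) (swap k u)"

text \<open>t L: appending a list of jumps [x1/u1]...[xk/uk] (u1 innermost).\<close>
fun jumps :: "trm \<Rightarrow> trm list \<Rightarrow> trm" where
  "jumps t [] = t"
| "jumps t (u # L) = jumps (Sub t u) L"

text \<open>split k t t': t' is obtained from t by inserting a fresh variable y at index k+1
  (shifting the other free indices >= k+1) and replacing some (possibly none/all)
  occurrences of x = index k by y.\<close>
inductive split :: "nat \<Rightarrow> trm \<Rightarrow> trm \<Rightarrow> bool" where
  split_keep: "split k (Var k) (Var k)"
| split_ren: "split k (Var k) (Var (Suc k))"
| split_lt: "i < k \<Longrightarrow> split k (Var i) (Var i)"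
| split_gt: "k < i \<Longrightarrow> split k (Var i) (Var (Suc i))"
| split_lam: "split (Suc k) t t' \<Longrightarrow> split k (Lam t) (Lam t')"
| split_app: "split k t t' \<Longrightarrow> split k u u' \<Longrightarrow> split k (App t u) (App t' u')"
| split_sub: "split (Suc k) t t' \<Longrightarrow> split k u u' \<Longrightarrow> split k (Sub t u) (Sub t' u')"

inductive root :: "trm \<Rightarrow> trm \<Rightarrow> bool" where
  dB: "root (App (jumps (Lam t) L) u) (jumps (Sub t ((lift 0 ^^ length L) u)) L)"
| w: "occ 0 t = 0 \<Longrightarrow> root (Sub t u) (down 0 t)"
| d: "occ 0 t = 1 \<Longrightarrow> root (Sub t u) (subst 0 u t)"
| c: "occ 0 t \<ge> 2 \<Longrightarrow> split 0 t t' \<Longrightarrow> occ 0 t' \<ge> 1 \<Longrightarrow> occ 1 t' \<ge> 1 \<Longrightarrow>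
      root (Sub t u) (Sub (Sub t' (lift 0 u)) u)"

inductive step :: "trm \<Rightarrow> trm \<Rightarrow> bool" where
  step_root: "root t t' \<Longrightarrow> step t t'"
| step_lam: "step t t' \<Longrightarrow> step (Lam t) (Lam t')"
| step_appl: "step t t' \<Longrightarrow> step (App t u) (App t' u)"
| step_appr: "step u u' \<Longrightarrow> step (App t u) (App t u')"
| step_subl: "step t t' \<Longrightarrow> step (Sub t u) (Sub t' u)"
| step_subr: "step u u' \<Longrightarrow> step (Sub t u) (Sub t u')"

text \<open>Equation t[x/s][y/v] ~ t[y/v][x/s] (y not free in s; x not free in v holds by alpha).\<close>
inductive cs_ax :: "trm \<Rightarrow> trm \<Rightarrow> bool" where
  "0 \<notin> fv s \<Longrightarrow> cs_ax (Sub (Sub t s) v) (Sub (Sub (swap 0 t) (lift 0 v)) (down 0 s))"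

inductive o_ax :: "trm \<Rightarrow> trm \<Rightarrow> bool" where
  o_cs: "cs_ax t t' \<Longrightarrow> o_ax t t'"
| o_lam: "0 \<notin> fv s \<Longrightarrow> o_ax (Lam (Sub t s)) (Sub (Lam (swap 0 t)) (down 0 s))"
| o_app: "o_ax (App (Sub t s) v) (Sub (App t (lift 0 v)) s)"

inductive ctx_eq :: "(trm \<Rightarrow> trm \<Rightarrow> bool) \<Rightarrow> trm \<Rightarrow> trm \<Rightarrow> bool" for ax where
  eq_ax: "ax t t' \<Longrightarrow> ctx_eq ax t t'"
| eq_refl: "ctx_eq ax t t"
| eq_sym: "ctx_eq ax t t' \<Longrightarrow> ctx_eq ax t' t"
| eq_trans: "ctx_eq ax t t' \<Longrightarrow> ctx_eq ax t' t'' \<Longrightarrow> ctx_eq ax t t''"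
| eq_lam: "ctx_eq ax t t' \<Longrightarrow> ctx_eq ax (Lam t) (Lam t')"
| eq_app: "ctx_eq ax t t' \<Longrightarrow> ctx_eq ax u u' \<Longrightarrow> ctx_eq ax (App t u) (App t' u')"
| eq_sub: "ctx_eq ax t t' \<Longrightarrow> ctx_eq ax u u' \<Longrightarrow> ctx_eq ax (Sub t u) (Sub t' u')"

definition eq_CS :: "trm \<Rightarrow> trm \<Rightarrow> bool" where "eq_CS = ctx_eq cs_ax"
definition eq_o :: "trm \<Rightarrow> trm \<Rightarrow> bool" where "eq_o = ctx_eq o_ax"

definition strong_bisim :: "('a \<Rightarrow> 'a \<Rightarrow> bool) \<Rightarrow> ('a \<Rightarrow> 'a \<Rightarrow> bool) \<Rightarrow> bool" where
  "strong_bisim r E \<longleftrightarrow> (\<forall>s t. E s t \<longrightarrow>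
      (\<forall>s'. r s s' \<longrightarrow> (\<exists>t'. r t t' \<and> E s' t')) \<and>
      (\<forall>t'. r t t' \<longrightarrow> (\<exists>s'. r s s' \<and> E s' t')))"

end

theory Submission
  imports Defs
begin


definition shf :: "(nat \<Rightarrow> nat) \<Rightarrow> nat \<Rightarrow> nat" where
  "shf f i = (case i of 0 \<Rightarrow> 0 | Suc j \<Rightarrow> Suc (f j))"

fun ren :: "(nat \<Rightarrow> nat) \<Rightarrow> trm \<Rightarrow> trm" where
  "ren f (Var i) = Var (f i)"
| "ren f (Lam t) = Lam (ren (shf f) t)"
| "ren f (App t u) = App (ren f t) (ren f u)"
| "ren f (Sub t u) = Sub (ren (shf f) t) (ren f u)"

definition exts :: "(nat \<Rightarrow> trm) \<Rightarrow> nat \<Rightarrow> trm" where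
  "exts s i = (case i of 0 \<Rightarrow> Var 0 | Suc j \<Rightarrow> ren Suc (s j))"

fun ssub :: "(nat \<Rightarrow> trm) \<Rightarrow> trm \<Rightarrow> trm" where
  "ssub s (Var i) = s i"
| "ssub s (Lam t) = Lam (ssub (exts s) t)"
| "ssub s (App t u) = App (ssub s t) (ssub s u)"
| "ssub s (Sub t u) = Sub (ssub (exts s) t) (ssub s u)"

lemma shf_0[simp]: "shf f 0 = 0" and shf_Suc[simp]: "shf f (Suc i) = Suc (f i)"
  by (simp_all add: shf_def)
lemma exts_0[simp]: "exts s 0 = Var 0" and exts_Suc[simp]: "exts s (Suc i) = ren Suc (s i)"
  by (simp_all add: exts_def)

lemma shf_comp: "shf f \<circ> shf g = shf (f \<circ> g)"
  by (rule ext) (simp add: shf_def split: nat.split)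

lemma ren_comp: "ren f (ren g t) = ren (f \<circ> g) t"
  by (induction t arbitrary: f g) (auto simp: shf_comp)

lemma exts_ren: "exts (Var \<circ> f) = Var \<circ> shf f"
  by (rule ext) (simp add: exts_def shf_def split: nat.split)

lemma ren_ssub: "ren f t = ssub (Var \<circ> f) t"
  by (induction t arbitrary: f) (auto simp: exts_ren)

lemma ssub_ren: "ssub s (ren f t) = ssub (s \<circ> f) t"
proof (induction t arbitrary: s f)
  case (Lam t)
  have "exts s \<circ> shf f = exts (s \<circ> f)" by (rule ext) (simp add: exts_def shf_def split: nat.split)
  with Lam show ?case by (simp add: comp_def)
next
  case (Sub t u)
  have "exts s \<circ> shf f = exts (s \<circ> f)" by (rule ext) (simp add: exts_def shf_def split: nat.split)
  with Sub show ?case by (simp add: comp_def)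
qed auto

lemma ren_ssub2: "ren f (ssub s t) = ssub (ren f \<circ> s) t"
proof (induction t arbitrary: s f)
  case (Lam t)
  have "ren (shf f) \<circ> exts s = exts (ren f \<circ> s)"
    by (rule ext) (simp add: exts_def ren_comp split: nat.split, simp add: comp_def)
  with Lam show ?case by (simp add: comp_def)
next
  case (Sub t u)
  have "ren (shf f) \<circ> exts s = exts (ren f \<circ> s)"
    by (rule ext) (simp add: exts_def ren_comp split: nat.split, simp add: comp_def)
  with Sub show ?case by (simp add: comp_def)
qed auto

lemma exts_comp: "ssub (exts s) \<circ> exts r = exts (ssub s \<circ> r)"
  by (rule ext) (simp add: exts_def ssub_ren ren_ssub2 split: nat.split, simp add: comp_def)

lemma ssub_comp: "ssub s (ssub r t) = ssub (ssub s \<circ> r) t"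
  by (induction t arbitrary: s r) (auto simp: exts_comp)

lemma exts_Var: "exts Var = Var"
  by (rule ext) (simp add: exts_def split: nat.split)

lemma ssub_Var: "ssub Var t = t"
  by (induction t) (auto simp: exts_Var)

lemma img_pred: "i \<in> (\<lambda>i. i - 1) ` (A - {0}) \<longleftrightarrow> Suc i \<in> A"
proof
  assume "i \<in> (\<lambda>i. i - 1) ` (A - {0})"
  then obtain x where "x \<in> A" "x \<noteq> 0" "i = x - 1" by auto
  then show "Suc i \<in> A" by (cases x) auto
next
  assume "Suc i \<in> A" then show "i \<in> (\<lambda>i. i - 1) ` (A - {0})"
    by (intro image_eqI[of _ _ "Suc i"]) auto
qed
lemma mem_fv_Lam[simp]: "i \<in> fv (Lam t) \<longleftrightarrow> Suc i \<in> fv t"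
  by (simp only: fv.simps img_pred)
lemma mem_fv_Sub[simp]: "i \<in> fv (Sub t u) \<longleftrightarrow> Suc i \<in> fv t \<or> i \<in> fv u"
  by (simp only: fv.simps img_pred Un_iff)
lemma mem_fv_Var[simp]: "i \<in> fv (Var j) \<longleftrightarrow> i = j" by simp
lemma mem_fv_App[simp]: "i \<in> fv (App t u) \<longleftrightarrow> i \<in> fv t \<or> i \<in> fv u" by simp

declare fv.simps(2,4)[simp del]

lemma bex_fv_Lam[simp]: "(\<exists>i\<in>fv (Lam t). P i) \<longleftrightarrow> (\<exists>i. Suc i \<in> fv t \<and> P i)" by auto
lemma bex_fv_Sub[simp]: "(\<exists>i\<in>fv (Sub t u). P i) \<longleftrightarrow> (\<exists>i. Suc i \<in> fv t \<and> P i) \<or> (\<exists>i\<in>fv u. P i)" by auto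
lemma ex_shf: "(\<exists>i\<in>A. shf f i = Suc j) \<longleftrightarrow> (\<exists>i. Suc i \<in> A \<and> f i = j)"
proof
  assume "\<exists>i\<in>A. shf f i = Suc j"
  then obtain i where "i \<in> A" "shf f i = Suc j" by blast
  then show "\<exists>i. Suc i \<in> A \<and> f i = j" by (cases i) auto
qed force
lemma ex_exts: "(\<exists>i\<in>A. Suc j \<in> fv (exts s i)) \<longleftrightarrow> (\<exists>i. Suc i \<in> A \<and> Suc j \<in> fv (ren Suc (s i)))"
proof
  assume "\<exists>i\<in>A. Suc j \<in> fv (exts s i)"
  then obtain i where "i \<in> A" "Suc j \<in> fv (exts s i)" by blast
  then show "\<exists>i. Suc i \<in> A \<and> Suc j \<in> fv (ren Suc (s i))" by (cases i) auto
qed force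
lemma fv_ren: "j \<in> fv (ren f t) \<longleftrightarrow> (\<exists>i\<in>fv t. f i = j)"
proof (induction t arbitrary: f j)
  case (Lam t) then show ?case by (simp add: ex_shf)
next
  case (Sub t u) then show ?case by (simp add: ex_shf)
qed auto
lemma fv_ssub: "j \<in> fv (ssub s t) \<longleftrightarrow> (\<exists>i\<in>fv t. j \<in> fv (s i))"
proof (induction t arbitrary: s j)
  case (Lam t) then show ?case by (simp add: ex_exts fv_ren)
next
  case (Sub t u) then show ?case by (simp add: ex_exts fv_ren)
qed auto

lemma ren_cong: "(\<And>i. i \<in> fv t \<Longrightarrow> f i = g i) \<Longrightarrow> ren f t = ren g t"
proof (induction t arbitrary: f g)
  case (Var x) then show ?case by simp
next
  case (App t u)
  have "ren f t = ren g t" by (rule App.IH(1)) (use App.prems in auto)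
  moreover have "ren f u = ren g u" by (rule App.IH(2)) (use App.prems in auto)
  ultimately show ?case by simp
next
  case (Lam t)
  have "ren (shf f) t = ren (shf g) t"
  proof (rule Lam.IH)
    fix i assume "i \<in> fv t" then show "shf f i = shf g i" using Lam.prems by (cases i) auto
  qed
  then show ?case by simp
next
  case (Sub t u)
  have "ren (shf f) t = ren (shf g) t"
  proof (rule Sub.IH(1))
    fix i assume "i \<in> fv t" then show "shf f i = shf g i" using Sub.prems by (cases i) auto
  qed
  moreover have "ren f u = ren g u" by (rule Sub.IH(2)) (use Sub.prems in auto)
  ultimately show ?case by simp
qed

lemma ssub_cong: "(\<And>i. i \<in> fv t \<Longrightarrow> f i = g i) \<Longrightarrow> ssub f t = ssub g t"
proof (induction t arbitrary: f g)
  case (Var x) then show ?case by simp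
next
  case (App t u)
  have "ssub f t = ssub g t" by (rule App.IH(1)) (use App.prems in auto)
  moreover have "ssub f u = ssub g u" by (rule App.IH(2)) (use App.prems in auto)
  ultimately show ?case by simp
next
  case (Lam t)
  have "ssub (exts f) t = ssub (exts g) t"
  proof (rule Lam.IH)
    fix i assume "i \<in> fv t" then show "exts f i = exts g i" using Lam.prems by (cases i) auto
  qed
  then show ?case by simp
next
  case (Sub t u)
  have "ssub (exts f) t = ssub (exts g) t"
  proof (rule Sub.IH(1))
    fix i assume "i \<in> fv t" then show "exts f i = exts g i" using Sub.prems by (cases i) auto
  qed
  moreover have "ssub f u = ssub g u" by (rule Sub.IH(2)) (use Sub.prems in auto)
  ultimately show ?case by simp
qed
definition liftf :: "nat \<Rightarrow> nat \<Rightarrow> nat" where "liftf k i = (if i < k then i else Suc i)"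
definition swapf :: "nat \<Rightarrow> nat \<Rightarrow> nat" where "swapf k i = (if i = k then Suc k else if i = Suc k then k else i)"
definition downf :: "nat \<Rightarrow> nat \<Rightarrow> nat" where "downf k i = (if i < k then i else i - 1)"
definition substs :: "nat \<Rightarrow> trm \<Rightarrow> nat \<Rightarrow> trm" where
  "substs k u i = (if i < k then Var i else if i = k then u else Var (i - 1))"

lemma lift_ren: "lift k t = ren (liftf k) t"
proof (induction t arbitrary: k)
  case (Lam t)
  have "shf (liftf k) = liftf (Suc k)" by (rule ext) (simp add: shf_def liftf_def split: nat.split)
  with Lam show ?case by (simp add: comp_def)
next
  case (Sub t u)
  have "shf (liftf k) = liftf (Suc k)" by (rule ext) (simp add: shf_def liftf_def split: nat.split)
  with Sub show ?case by (simp add: comp_def)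
qed (auto simp: liftf_def)

lemma liftf0: "liftf 0 = Suc" by (rule ext) (simp add: liftf_def)

lemma lift0: "lift 0 t = ren Suc t" by (simp add: lift_ren liftf0)

lemma swap_ren: "swap k t = ren (swapf k) t"
proof (induction t arbitrary: k)
  case (Lam t)
  have "shf (swapf k) = swapf (Suc k)" by (rule ext) (simp add: shf_def swapf_def split: nat.split)
  with Lam show ?case by (simp add: comp_def)
next
  case (Sub t u)
  have "shf (swapf k) = swapf (Suc k)" by (rule ext) (simp add: shf_def swapf_def split: nat.split)
  with Sub show ?case by (simp add: comp_def)
qed (auto simp: swapf_def)

lemma down_ren: "k \<notin> fv t \<Longrightarrow> down k t = ren (downf k) t"
proof (induction t arbitrary: k)
  case (Lam t)
  have "ren (downf (Suc k)) t = ren (shf (downf k)) t"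
  proof (rule ren_cong)
    fix i assume "i \<in> fv t"
    with Lam.prems have "i \<noteq> Suc k" by auto
    then show "downf (Suc k) i = shf (downf k) i" by (cases i) (auto simp: downf_def)
  qed
  with Lam show ?case by (simp add: comp_def)
next
  case (Sub t u)
  have "ren (downf (Suc k)) t = ren (shf (downf k)) t"
  proof (rule ren_cong)
    fix i assume "i \<in> fv t"
    with Sub.prems have "i \<noteq> Suc k" by auto
    then show "downf (Suc k) i = shf (downf k) i" by (cases i) (auto simp: downf_def)
  qed
  with Sub show ?case by (simp add: comp_def)
qed (auto simp: downf_def)

lemma subst_ssub: "subst k u t = ssub (substs k u) t"
proof (induction t arbitrary: k u)
  case (Lam t)
  have "exts (substs k u) = substs (Suc k) (lift 0 u)"
    by (rule ext) (simp add: exts_def substs_def lift0 split: nat.split)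
  with Lam show ?case by (simp add: comp_def)
next
  case (Sub t u')
  have "exts (substs k u) = substs (Suc k) (lift 0 u)"
    by (rule ext) (simp add: exts_def substs_def lift0 split: nat.split)
  with Sub show ?case by (simp add: comp_def)
qed (auto simp: substs_def)

definition colf :: "nat \<Rightarrow> nat \<Rightarrow> nat" where "colf k i = (if i \<le> k then i else i - 1)"

lemma ren_notin: "(\<And>i. i \<in> fv t \<Longrightarrow> f i \<noteq> k) \<Longrightarrow> k \<notin> fv (ren f t)"
  by (auto simp: fv_ren)

lemma ren_id: "(\<And>i. i \<in> fv t \<Longrightarrow> f i = i) \<Longrightarrow> ren f t = t"
proof -
  assume "\<And>i. i \<in> fv t \<Longrightarrow> f i = i"
  then have "ren f t = ren (\<lambda>i. i) t" by (rule ren_cong)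
  also have "\<dots> = t" using ssub_Var[of t] by (simp add: ren_ssub comp_def)
  finally show ?thesis .
qed

lemma mem_ne: "i \<in> A \<Longrightarrow> k \<notin> A \<Longrightarrow> (i = k) = False" by auto
lemma mem_ne': "i \<in> A \<Longrightarrow> k \<notin> A \<Longrightarrow> (k = i) = False" by auto
lemma mem_pos: "(i::nat) \<in> A \<Longrightarrow> 0 \<notin> A \<Longrightarrow> (0 < i) = True" by (cases "i = 0") auto
lemmas memh = mem_ne mem_ne' mem_pos

lemma id1: "0 \<notin> fv t \<Longrightarrow> down 1 (swap 0 t) = down 0 t"
proof -
  assume a: "0 \<notin> fv t"
  have "1 \<notin> fv (swap 0 t)" unfolding swap_ren by (rule ren_notin) (use a in \<open>auto simp: swapf_def; metis gr0I\<close>)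
  then show ?thesis using a
    by (simp add: down_ren swap_ren ren_comp) (rule ren_cong, case_tac "i = 0", auto simp: swapf_def downf_def)
qed

lemma id2: "down 0 (lift 0 v) = v"
proof -
  have "0 \<notin> fv (lift 0 v)" unfolding lift0 by (rule ren_notin) auto
  then show ?thesis by (simp add: down_ren lift0 ren_comp) (rule ren_id, simp add: downf_def)
qed

lemmas NORM = lift_ren swap_ren subst_ssub ren_ssub ssub_comp
lemmas FD = liftf_def swapf_def downf_def colf_def substs_def exts_def

lemma occ_ren: "(\<And>i. i \<in> fv t \<Longrightarrow> f i = j \<longleftrightarrow> i = j') \<Longrightarrow> occ j (ren f t) = occ j' t"
proof (induction t arbitrary: f j j')
  case (Var x) then show ?case by auto
next
  case (App t u)
  have "occ j (ren f t) = occ j' t" by (rule App.IH(1)) (use App.prems in auto)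
  moreover have "occ j (ren f u) = occ j' u" by (rule App.IH(2)) (use App.prems in auto)
  ultimately show ?case by simp
next
  case (Lam t)
  have "occ (Suc j) (ren (shf f) t) = occ (Suc j') t"
  proof (rule Lam.IH)
    fix i assume "i \<in> fv t" then show "shf f i = Suc j \<longleftrightarrow> i = Suc j'" using Lam.prems by (cases i) auto
  qed
  then show ?case by simp
next
  case (Sub t u)
  have "occ (Suc j) (ren (shf f) t) = occ (Suc j') t"
  proof (rule Sub.IH(1))
    fix i assume "i \<in> fv t" then show "shf f i = Suc j \<longleftrightarrow> i = Suc j'" using Sub.prems by (cases i) auto
  qed
  moreover have "occ j (ren f u) = occ j' u" by (rule Sub.IH(2)) (use Sub.prems in auto)
  ultimately show ?case by simp
qed

lemma occ_fv: "occ k t = 0 \<longleftrightarrow> k \<notin> fv t"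
  by (induction t arbitrary: k) auto

lemma occ_ssub: "s k = Var k \<Longrightarrow> (\<And>i. i \<in> fv t \<Longrightarrow> i \<noteq> k \<Longrightarrow> k \<notin> fv (s i)) \<Longrightarrow> occ k (ssub s t) = occ k t"
proof (induction t arbitrary: s k)
  case (Var x) then show ?case by (cases "x = k") (auto simp: occ_fv)
next
  case (App t u)
  have "occ k (ssub s t) = occ k t" by (rule App.IH(1)) (use App.prems in auto)
  moreover have "occ k (ssub s u) = occ k u" by (rule App.IH(2)) (use App.prems in auto)
  ultimately show ?case by simp
next
  case (Lam t)
  have "occ (Suc k) (ssub (exts s) t) = occ (Suc k) t"
  proof (rule Lam.IH)
    show "exts s (Suc k) = Var (Suc k)" using Lam.prems by simp
    fix i assume "i \<in> fv t" "i \<noteq> Suc k" then show "Suc k \<notin> fv (exts s i)" using Lam.prems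
      by (cases i) (auto simp: fv_ren)
  qed
  then show ?case by simp
next
  case (Sub t u)
  have "occ (Suc k) (ssub (exts s) t) = occ (Suc k) t"
  proof (rule Sub.IH(1))
    show "exts s (Suc k) = Var (Suc k)" using Sub.prems by simp
    fix i assume "i \<in> fv t" "i \<noteq> Suc k" then show "Suc k \<notin> fv (exts s i)" using Sub.prems
      by (cases i) (auto simp: fv_ren)
  qed
  moreover have "occ k (ssub s u) = occ k u" by (rule Sub.IH(2)) (use Sub.prems in auto)
  ultimately show ?case by simp
qed

lemma shf_colf: "shf (colf k) = colf (Suc k)"
  by (rule ext) (simp add: shf_def colf_def split: nat.split)

lemma occ_colf: "occ k (ren (colf k) t) = occ k t + occ (Suc k) t"
  by (induction t arbitrary: k) (auto simp: shf_colf colf_def)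

lemma split_colf: "split k t t' \<longleftrightarrow> t = ren (colf k) t'"
proof
  assume "split k t t'" then show "t = ren (colf k) t'"
    apply (induction rule: split.induct)
    apply (simp_all add: shf_colf)
    apply (simp_all add: colf_def)
    done
next
  assume "t = ren (colf k) t'" then show "split k t t'"
  proof (induction t' arbitrary: k t)
    case (Var x)
    show ?case
    proof (cases "x \<le> Suc k")
      case True then consider "x < k" | "x = k" | "x = Suc k" by linarith
      then show ?thesis using Var by cases (auto simp: colf_def intro: split.intros)
    next
      case False
      then obtain y where "x = Suc y" "k < y" by (cases x) auto
      then show ?thesis using Var by (auto simp: colf_def intro: split.intros)
    qed
  next
    case (Lam t') then show ?case by (auto simp: shf_colf intro: split.intros)
  next
    case (App t1 t2) then show ?case by (auto intro: split.intros)
  next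
    case (Sub t1 t2) then show ?case by (auto simp: shf_colf intro: split.intros)
  qed
qed




lemma lift_down: "k \<notin> fv t \<Longrightarrow> lift k (down k t) = t"
proof -
  assume a: "k \<notin> fv t"
  have "ren (liftf k \<circ> downf k) t = t"
  proof (rule ren_id)
    fix i assume "i \<in> fv t" with a have "i \<noteq> k" by auto
    then show "(liftf k \<circ> downf k) i = i" by (auto simp: liftf_def downf_def)
  qed
  with a show ?thesis by (simp add: down_ren lift_ren ren_comp)
qed

lemma down_lift: "down k (lift k t) = t"
proof -
  have "k \<notin> fv (lift k t)" by (auto simp: lift_ren fv_ren liftf_def)
  then show ?thesis by (simp add: down_ren lift_ren ren_comp) (rule ren_id, auto simp: liftf_def downf_def)
qed

lemma lift_inj: "lift k a = lift k b \<Longrightarrow> a = b"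
  by (metis down_lift)

lemma notin_lift: "k \<notin> fv (lift k t)"
  by (auto simp: lift_ren fv_ren liftf_def)

lemma notin_ex: "k \<notin> fv t \<Longrightarrow> \<exists>t0. t = lift k t0"
  using lift_down by metis

lemma ssub_lift0: "ssub (exts s) (lift 0 t) = lift 0 (ssub s t)"
  by (simp add: NORM) (auto intro!: ssub_cong simp: FD NORM split: nat.split)

lemma ssub_liftn: "ssub ((exts ^^ n) s) ((lift 0 ^^ n) t) = (lift 0 ^^ n) (ssub s t)"
  by (induction n) (auto simp: ssub_lift0)

lemma jumps_snoc: "jumps t (L @ [v]) = Sub (jumps t L) v"
  by (induction L arbitrary: t) auto

lemma jumps_Sub: "jumps (Lam t) L = Sub A B \<Longrightarrow> \<exists>L'. L = L' @ [B] \<and> A = jumps (Lam t) L'"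
  by (cases L rule: rev_cases) (auto simp: jumps_snoc)

lemma jumps_Lam: "jumps (Lam t) L = Lam A \<Longrightarrow> L = [] \<and> A = t"
  by (cases L rule: rev_cases) (auto simp: jumps_snoc)

lemma jumps_App: "jumps (Lam t) L \<noteq> App A B"
  by (cases L rule: rev_cases) (auto simp: jumps_snoc)

lemma jumps_Var: "jumps (Lam t) L \<noteq> Var i"
  by (cases L rule: rev_cases) (auto simp: jumps_snoc)

fun sL :: "(nat \<Rightarrow> trm) \<Rightarrow> trm list \<Rightarrow> trm list" where
  "sL s [] = []"
| "sL s (u # L) = ssub ((exts ^^ length L) s) u # sL s L"

lemma length_sL[simp]: "length (sL s L) = length L"
  by (induction L) auto

lemma ssub_jumps: "ssub s (jumps t L) = jumps (ssub ((exts ^^ length L) s) t) (sL s L)"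
  by (induction L arbitrary: t) auto

fun Lfv :: "trm list \<Rightarrow> nat set" where
  "Lfv [] = {}"
| "Lfv (v # L) = {j. j + length L \<in> fv v} \<union> Lfv L"

lemma fv_jumps: "j \<in> fv (jumps t L) \<longleftrightarrow> j + length L \<in> fv t \<or> j \<in> Lfv L"
  by (induction L arbitrary: t j) auto

lemma ren_Lam: "ren f t = Lam a \<Longrightarrow> \<exists>a'. t = Lam a' \<and> a = ren (shf f) a'"
  by (cases t) auto
lemma ren_App: "ren f t = App a b \<Longrightarrow> \<exists>a' b'. t = App a' b' \<and> a = ren f a' \<and> b = ren f b'"
  by (cases t) auto
lemma ren_Sub: "ren f t = Sub a b \<Longrightarrow> \<exists>a' b'. t = Sub a' b' \<and> a = ren (shf f) a' \<and> b = ren f b'"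
  by (cases t) auto




lemma root_w': "root (Sub (lift 0 t0) u) t0"
proof -
  have "occ 0 (lift 0 t0) = 0" by (simp add: occ_fv notin_lift)
  from root.w[OF this, of u] show ?thesis by (simp add: down_lift)
qed

lemma root_c': "1 \<le> occ 0 t' \<Longrightarrow> 1 \<le> occ (Suc 0) t' \<Longrightarrow> root (Sub (ren (colf 0) t') u) (Sub (Sub t' (lift 0 u)) u)"
  by (rule root.c) (auto simp: occ_colf split_colf)

lemma root_SubE: "root (Sub t u) X \<Longrightarrow> (\<exists>t0. t = lift 0 t0 \<and> X = t0) \<or> (occ 0 t = 1 \<and> X = subst 0 u t) \<or>
   (\<exists>t'. t = ren (colf 0) t' \<and> 1 \<le> occ 0 t' \<and> 1 \<le> occ (Suc 0) t' \<and> X = Sub (Sub t' (lift 0 u)) u)"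
  apply (erule root.cases)
     apply simp_all
    apply (metis lift_down occ_fv)
   apply (auto simp: split_colf)
  done

lemma root_AppE: "root (App F u) X \<Longrightarrow> \<exists>t L. F = jumps (Lam t) L \<and> X = jumps (Sub t ((lift 0 ^^ length L) u)) L"
  by (induction "App F u" X rule: root.induct) auto

lemma root_Lam: "\<not> root (Lam t) X"
  by (auto elim: root.cases)
lemma root_Var: "\<not> root (Var i) X"
  by (auto elim: root.cases)

lemma ssub_idI: "(\<And>i. s i = Var i) \<Longrightarrow> t = ssub s t"
proof -
  assume "\<And>i. s i = Var i" then have "s = Var" by auto
  then show ?thesis by (simp add: ssub_Var)
qed

lemma ssub_idI': "(\<And>i. s i = Var i) \<Longrightarrow> ssub s t = t"
  using ssub_idI[of s t] by simp

lemma ssub_colf: "ssub (exts s) (ren (colf 0) t) = ren (colf 0) (ssub (exts (exts s)) t)"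
  by (simp add: NORM) (auto intro!: ssub_cong simp: FD NORM split: nat.split)

lemma ssub_subst0: "ssub s (subst 0 u t) = subst 0 (ssub s u) (ssub (exts s) t)"
  by (simp add: NORM) (auto intro!: ssub_cong ssub_idI simp: FD NORM split: nat.split)

lemma root_ssub: "root t t' \<Longrightarrow> root (ssub s t) (ssub s t')"
proof (induction rule: root.induct)
  case (dB t L u)
  show ?case
    using root.dB[of "ssub (exts ((exts ^^ length L) s)) t" "sL s L" "ssub s u"]
    by (simp add: ssub_jumps ssub_liftn)
next
  case (w t u)
  then obtain t0 where t0: "t = lift 0 t0" using notin_ex occ_fv by metis
  show ?case using root_w'[of "ssub s t0" "ssub s u"] by (simp add: t0 down_lift ssub_lift0)
next
  case (d t u)
  have "occ 0 (ssub (exts s) t) = occ 0 t"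
    by (rule occ_ssub) (auto simp: fv_ren exts_def split: nat.splits)
  with d have "root (Sub (ssub (exts s) t) (ssub s u)) (subst 0 (ssub s u) (ssub (exts s) t))"
    by (intro root.d) simp
  then show ?case by (simp add: ssub_subst0)
next
  case (c t t' u)
  then have t: "t = ren (colf 0) t'" by (simp add: split_colf)
  have o0: "occ 0 (ssub (exts (exts s)) t') = occ 0 t'"
    by (rule occ_ssub) (auto simp: fv_ren exts_def split: nat.splits)
  have o1: "occ (Suc 0) (ssub (exts (exts s)) t') = occ (Suc 0) t'"
    by (rule occ_ssub) (auto simp: fv_ren exts_def split: nat.splits)
  show ?case using root_c'[of "ssub (exts (exts s)) t'" "ssub s u"] c o0 o1
    by (simp add: t ssub_colf ssub_lift0)
qed

lemma step_ssub: "step t t' \<Longrightarrow> step (ssub s t) (ssub s t')"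
  by (induction arbitrary: s rule: step.induct) (auto intro: step.intros root_ssub)

lemma step_ren: "step t t' \<Longrightarrow> step (ren f t) (ren f t')"
  by (simp add: ren_ssub step_ssub)

lemma step_lift: "step t t' \<Longrightarrow> step (lift k t) (lift k t')"
  by (simp add: lift_ren step_ren)

lemma step_swap: "step t t' \<Longrightarrow> step (swap k t) (swap k t')"
  by (simp add: swap_ren step_ren)

lemma fv_liftn: "j + n \<in> fv ((lift 0 ^^ n) u) \<longleftrightarrow> j \<in> fv u"
  by (induction n arbitrary: j) (auto simp: lift0 fv_ren)

lemma root_fv: "root t t' \<Longrightarrow> j \<in> fv t' \<Longrightarrow> j \<in> fv t"
proof (induction rule: root.induct)
  case (dB t L u) then show ?case by (auto simp: fv_jumps fv_liftn)
next
  case (w t u)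
  then obtain t0 where t0: "t = lift 0 t0" using notin_ex occ_fv by metis
  then show ?case using w by (simp add: t0 down_lift) (auto simp: lift0 fv_ren)
next
  case (d t u) then show ?case by (auto simp: subst_ssub fv_ssub substs_def split: if_splits)
next
  case (c t t' u)
  then have t: "t = ren (colf 0) t'" by (simp add: split_colf)
  from c.prems consider "Suc (Suc j) \<in> fv t'" | "j \<in> fv u" by (auto simp: lift0 fv_ren)
  then show ?case
  proof cases
    case 1 then have "Suc j \<in> fv t" unfolding t fv_ren by (intro bexI[of _ "Suc (Suc j)"]) (auto simp: colf_def)
    then show ?thesis by simp
  qed simp
qed

lemma step_fv: "step t t' \<Longrightarrow> j \<in> fv t' \<Longrightarrow> j \<in> fv t"
  by (induction arbitrary: j rule: step.induct) (auto dest: root_fv)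

definition predf :: "nat \<Rightarrow> nat" where "predf i = i - 1"

lemma lift_back: "ssub (Var \<circ> predf) (lift 0 x) = x"
  by (simp add: NORM) (rule ssub_idI', simp add: FD predf_def)

lemma step_lift_inv: "step (lift 0 a) b \<Longrightarrow> \<exists>b0. b = lift 0 b0 \<and> step a b0"
proof -
  assume st: "step (lift 0 a) b"
  have "0 \<notin> fv b" using step_fv[OF st] notin_lift by blast
  then obtain b0 where b: "b = lift 0 b0" using notin_ex by blast
  from step_ssub[OF st, of "Var \<circ> predf"] have "step a b0" by (simp add: b lift_back)
  with b show ?thesis by blast
qed




lemma ren_swap0: "ren (shf (shf f)) (swap 0 x) = swap 0 (ren (shf (shf f)) x)"
  by (simp add: NORM) (auto intro!: ssub_cong simp: FD NORM shf_def split: nat.split)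
lemma ren_lift0: "ren (shf f) (lift 0 x) = lift 0 (ren f x)"
  by (simp add: NORM) (auto intro!: ssub_cong simp: FD NORM shf_def split: nat.split)
lemma ssub_swap0: "ssub (exts (exts s)) (swap 0 x) = swap 0 (ssub (exts (exts s)) x)"
  by (simp add: NORM) (auto intro!: ssub_cong simp: FD NORM split: nat.split)
lemma swap_swap: "swap k (swap k x) = x"
  by (simp add: swap_ren ren_comp) (rule ren_id, simp add: swapf_def)

lemma occ_lift0: "occ (Suc k) (lift 0 x) = occ k x"
  by (simp add: lift0) (rule occ_ren, auto)
lemma occ_lift0_0: "occ 0 (lift 0 x) = 0"
  by (simp add: occ_fv notin_lift)
lemma occ_swap0_0: "occ 0 (swap 0 x) = occ (Suc 0) x"
  by (simp add: swap_ren) (rule occ_ren, auto simp: swapf_def)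
lemma occ_swap0_1: "occ (Suc 0) (swap 0 x) = occ 0 x"
  by (simp add: swap_ren) (rule occ_ren, auto simp: swapf_def)
lemma occ_swap0_2: "occ (Suc (Suc k)) (swap 0 x) = occ (Suc (Suc k)) x"
  by (simp add: swap_ren) (rule occ_ren, auto simp: swapf_def)
lemmas occs = occ_lift0 occ_lift0_0 occ_swap0_0 occ_swap0_1 occ_swap0_2

lemma ren_lift_inv: "ren (shf f) x = lift 0 s \<Longrightarrow> \<exists>s1. x = lift 0 s1 \<and> s = ren f s1"
proof -
  assume a: "ren (shf f) x = lift 0 s"
  have "0 \<notin> fv x"
  proof
    assume "0 \<in> fv x" then have "0 \<in> fv (ren (shf f) x)" by (simp add: fv_ren) (rule bexI[of _ 0], auto)
    then show False using a notin_lift by metis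
  qed
  then obtain s1 where x: "x = lift 0 s1" using notin_ex by blast
  with a have "lift 0 (ren f s1) = lift 0 s" by (simp add: ren_lift0)
  then have "s = ren f s1" by (metis lift_inj)
  with x show ?thesis by blast
qed

inductive A :: "bool \<Rightarrow> trm \<Rightarrow> trm \<Rightarrow> bool" for b where
  aCS: "A b (Sub (Sub t (lift 0 s)) v) (Sub (Sub (swap 0 t) (lift 0 v)) s)"
| aLF: "b \<Longrightarrow> A b (Lam (Sub t (lift 0 s))) (Sub (Lam (swap 0 t)) s)"
| aLB: "b \<Longrightarrow> A b (Sub (Lam t) s) (Lam (Sub (swap 0 t) (lift 0 s)))"
| aAF: "b \<Longrightarrow> A b (App (Sub t s) v) (Sub (App t (lift 0 v)) s)"
| aAB: "b \<Longrightarrow> A b (Sub (App t (lift 0 v)) s) (App (Sub t s) v)"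

definition E :: "bool \<Rightarrow> trm \<Rightarrow> trm \<Rightarrow> bool" where
  "E b = ctx_eq (if b then o_ax else cs_ax)"

lemma A_sym: "A b x y \<Longrightarrow> A b y x"
proof (induction rule: A.induct)
  case (aCS t s v) show ?case using A.aCS[of b "swap 0 t" v s] by (simp add: swap_swap)
next
  case (aLF t s) show ?case using A.aLB[of b "swap 0 t" s] aLF by (simp add: swap_swap)
next
  case (aLB t s) show ?case using A.aLF[of b "swap 0 t" s] aLB by (simp add: swap_swap)
qed (auto intro: A.intros)

lemma A_E: "A b x y \<Longrightarrow> E b x y"
proof (induction rule: A.induct)
  case (aCS t s v)
  have "cs_ax (Sub (Sub t (lift 0 s)) v) (Sub (Sub (swap 0 t) (lift 0 v)) s)"
    using cs_ax.intros[of "lift 0 s" t v] by (simp add: notin_lift down_lift)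
  then show ?case unfolding E_def by (cases b) (auto intro: ctx_eq.intros o_ax.intros)
next
  case (aLF t s)
  have "o_ax (Lam (Sub t (lift 0 s))) (Sub (Lam (swap 0 t)) s)"
    using o_lam[of "lift 0 s" t] by (simp add: notin_lift down_lift)
  then show ?case unfolding E_def using aLF by (auto intro: ctx_eq.intros)
next
  case (aLB t s)
  have "o_ax (Lam (Sub (swap 0 t) (lift 0 s))) (Sub (Lam t) s)"
    using o_lam[of "lift 0 s" "swap 0 t"] by (simp add: notin_lift down_lift swap_swap)
  then show ?case unfolding E_def using aLB by (auto intro: ctx_eq.intros)
next
  case (aAF t s v)
  then show ?case unfolding E_def by (auto intro: ctx_eq.intros o_ax.intros)
next
  case (aAB t v s)
  then show ?case unfolding E_def by (auto intro: ctx_eq.intros o_ax.intros)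
qed

lemma cs_A: "cs_ax x y \<Longrightarrow> A b x y"
proof (induction rule: cs_ax.induct)
  case (1 s t v)
  then obtain s0 where s: "s = lift 0 s0" using notin_ex by blast
  show ?case using A.aCS[of b t s0 v] by (simp add: s down_lift)
qed

lemma o_A: "o_ax x y \<Longrightarrow> A True x y"
proof (induction rule: o_ax.induct)
  case (o_cs t t') then show ?case by (rule cs_A)
next
  case (o_lam s t)
  then obtain s0 where s: "s = lift 0 s0" using notin_ex by blast
  show ?case using A.aLF[of True t s0] by (simp add: s down_lift)
next
  case (o_app t s v) show ?case by (rule A.aAF) simp
qed

lemma ax_A: "(if b then o_ax else cs_ax) x y \<Longrightarrow> A b x y"
  by (cases b) (auto intro: o_A cs_A)

lemma A_occ: "A b x y \<Longrightarrow> occ k x = occ k y"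
  by (induction arbitrary: k rule: A.induct) (simp_all add: occs)

lemma A_fv: "A b x y \<Longrightarrow> j \<in> fv x \<longleftrightarrow> j \<in> fv y"
  using A_occ occ_fv by metis

lemma A_ssub: "A b x y \<Longrightarrow> A b (ssub s x) (ssub s y)"
proof (induction arbitrary: s rule: A.induct)
  case (aCS t s' v) show ?case
    using A.aCS[of b "ssub (exts (exts s)) t" "ssub s s'" "ssub s v"]
    by (simp add: ssub_lift0 ssub_swap0)
next
  case (aLF t s') show ?case
    using A.aLF[of b "ssub (exts (exts s)) t" "ssub s s'"] aLF
    by (simp add: ssub_lift0 ssub_swap0)
next
  case (aLB t s') show ?case
    using A.aLB[of b "ssub (exts (exts s)) t" "ssub s s'"] aLB
    by (simp add: ssub_lift0 ssub_swap0)
next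
  case (aAF t s' v) show ?case
    using A.aAF[of b "ssub (exts s) t" "ssub s s'" "ssub s v"] aAF
    by (simp add: ssub_lift0)
next
  case (aAB t v s') show ?case
    using A.aAB[of b "ssub (exts s) t" "ssub s v" "ssub s s'"] aAB
    by (simp add: ssub_lift0)
qed

lemma A_ren_refl: "A b (ren f x') y \<Longrightarrow> \<exists>y'. A b x' y' \<and> y = ren f y'"
proof (induction "ren f x'" y arbitrary: f x' rule: A.induct)
  case (aCS t s v)
  from aCS(1)[symmetric] obtain a1 v1 where x': "x' = Sub a1 v1" and 1: "Sub (Sub t (lift 0 s)) v = Sub (ren (shf f) a1) (ren f v1)"
    by (cases x') auto
  from 1 obtain t1 S1 where a1: "a1 = Sub t1 S1" and t: "t = ren (shf (shf f)) t1" and S: "lift 0 s = ren (shf f) S1" and v: "v = ren f v1"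
    by (cases a1) auto
  from ren_lift_inv[OF S[symmetric]] obtain s1 where S1: "S1 = lift 0 s1" and s: "s = ren f s1" by blast
  show ?case
    by (rule exI[of _ "Sub (Sub (swap 0 t1) (lift 0 v1)) s1"])
       (simp add: x' a1 S1 t v s A.aCS ren_swap0 ren_lift0)
next
  case (aLF t s)
  from aLF(2)[symmetric] obtain a1 where x': "x' = Lam a1" and 1: "Sub t (lift 0 s) = ren (shf f) a1"
    by (cases x') auto
  from 1 obtain t1 S1 where a1: "a1 = Sub t1 S1" and t: "t = ren (shf (shf f)) t1" and S: "lift 0 s = ren (shf f) S1"
    by (cases a1) auto
  from ren_lift_inv[OF S[symmetric]] obtain s1 where S1: "S1 = lift 0 s1" and s: "s = ren f s1" by blast
  show ?case
    by (rule exI[of _ "Sub (Lam (swap 0 t1)) s1"])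
       (simp add: x' a1 S1 t s A.aLF aLF(1) ren_swap0 ren_lift0)
next
  case (aLB t s)
  from aLB(2)[symmetric] obtain a1 s1 where x': "x' = Sub a1 s1" and 1: "Lam t = ren (shf f) a1" and s: "s = ren f s1"
    by (cases x') auto
  from 1 obtain t1 where a1: "a1 = Lam t1" and t: "t = ren (shf (shf f)) t1"
    by (cases a1) auto
  show ?case
    by (rule exI[of _ "Lam (Sub (swap 0 t1) (lift 0 s1))"])
       (simp add: x' a1 t s A.aLB aLB(1) ren_swap0 ren_lift0)
next
  case (aAF t s v)
  from aAF(2)[symmetric] obtain a1 v1 where x': "x' = App a1 v1" and 1: "Sub t s = ren f a1" and v: "v = ren f v1"
    by (cases x') auto
  from 1 obtain t1 s1 where a1: "a1 = Sub t1 s1" and t: "t = ren (shf f) t1" and s: "s = ren f s1"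
    by (cases a1) auto
  show ?case
    by (rule exI[of _ "Sub (App t1 (lift 0 v1)) s1"])
       (simp add: x' a1 t s v A.aAF aAF(1) ren_lift0)
next
  case (aAB t v s)
  from aAB(2)[symmetric] obtain a1 s1 where x': "x' = Sub a1 s1" and 1: "App t (lift 0 v) = ren (shf f) a1" and s: "s = ren f s1"
    by (cases x') auto
  from 1 obtain t1 V1 where a1: "a1 = App t1 V1" and t: "t = ren (shf f) t1" and V: "lift 0 v = ren (shf f) V1"
    by (cases a1) auto
  from ren_lift_inv[OF V[symmetric]] obtain v1 where V1: "V1 = lift 0 v1" and v: "v = ren f v1" by blast
  show ?case
    by (rule exI[of _ "App (Sub t1 s1) v1"])
       (simp add: x' a1 V1 t s v A.aAB aAB(1) ren_lift0)
qed




inductive R1 :: "bool \<Rightarrow> trm \<Rightarrow> trm \<Rightarrow> bool" for b where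
  r_ax: "A b x y \<Longrightarrow> R1 b x y"
| r_lam: "R1 b t t' \<Longrightarrow> R1 b (Lam t) (Lam t')"
| r_appl: "R1 b t t' \<Longrightarrow> R1 b (App t u) (App t' u)"
| r_appr: "R1 b u u' \<Longrightarrow> R1 b (App t u) (App t u')"
| r_subl: "R1 b t t' \<Longrightarrow> R1 b (Sub t u) (Sub t' u)"
| r_subr: "R1 b u u' \<Longrightarrow> R1 b (Sub t u) (Sub t u')"

lemma E_refl: "E b x x" unfolding E_def by (rule eq_refl)
lemma E_sym: "E b x y \<Longrightarrow> E b y x" unfolding E_def by (rule eq_sym)
lemma E_trans: "E b x y \<Longrightarrow> E b y z \<Longrightarrow> E b x z" unfolding E_def by (rule eq_trans)
lemma E_lam: "E b x y \<Longrightarrow> E b (Lam x) (Lam y)" unfolding E_def by (rule eq_lam)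
lemma E_app: "E b x y \<Longrightarrow> E b u v \<Longrightarrow> E b (App x u) (App y v)" unfolding E_def by (rule eq_app)
lemma E_sub: "E b x y \<Longrightarrow> E b u v \<Longrightarrow> E b (Sub x u) (Sub y v)" unfolding E_def by (rule eq_sub)

lemma R1_sym: "R1 b x y \<Longrightarrow> R1 b y x"
  by (induction rule: R1.induct) (auto intro: R1.intros A_sym)

lemma R1_E: "R1 b x y \<Longrightarrow> E b x y"
  by (induction rule: R1.induct) (auto intro: A_E E_lam E_app E_sub E_refl)

lemma R1s_lam: "(R1 b)\<^sup>*\<^sup>* x y \<Longrightarrow> (R1 b)\<^sup>*\<^sup>* (Lam x) (Lam y)"
  by (induction rule: rtranclp_induct) (auto intro: rtranclp.rtrancl_into_rtrancl R1.intros)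
lemma R1s_appl: "(R1 b)\<^sup>*\<^sup>* x y \<Longrightarrow> (R1 b)\<^sup>*\<^sup>* (App x u) (App y u)"
  by (induction rule: rtranclp_induct) (auto intro: rtranclp.rtrancl_into_rtrancl R1.intros)
lemma R1s_appr: "(R1 b)\<^sup>*\<^sup>* x y \<Longrightarrow> (R1 b)\<^sup>*\<^sup>* (App u x) (App u y)"
  by (induction rule: rtranclp_induct) (auto intro: rtranclp.rtrancl_into_rtrancl R1.intros)
lemma R1s_subl: "(R1 b)\<^sup>*\<^sup>* x y \<Longrightarrow> (R1 b)\<^sup>*\<^sup>* (Sub x u) (Sub y u)"
  by (induction rule: rtranclp_induct) (auto intro: rtranclp.rtrancl_into_rtrancl R1.intros)
lemma R1s_subr: "(R1 b)\<^sup>*\<^sup>* x y \<Longrightarrow> (R1 b)\<^sup>*\<^sup>* (Sub u x) (Sub u y)"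
  by (induction rule: rtranclp_induct) (auto intro: rtranclp.rtrancl_into_rtrancl R1.intros)

lemma R1s_sym: "(R1 b)\<^sup>*\<^sup>* x y \<Longrightarrow> (R1 b)\<^sup>*\<^sup>* y x"
  by (induction rule: rtranclp_induct) (auto intro: converse_rtranclp_into_rtranclp R1_sym)

lemma E_R1s: "E b x y \<Longrightarrow> (R1 b)\<^sup>*\<^sup>* x y"
  unfolding E_def
proof (induction rule: ctx_eq.induct)
  case (eq_ax t t') then show ?case by (auto intro: r_ax ax_A)
next
  case (eq_sym t t') then show ?case by (blast intro: R1s_sym)
next
  case (eq_trans t t' t'') then show ?case by auto
next
  case (eq_lam t t') then show ?case by (blast intro: R1s_lam)
next
  case (eq_app t t' u u') then show ?case by (meson R1s_appl R1s_appr rtranclp_trans)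
next
  case (eq_sub t t' u u') then show ?case by (meson R1s_subl R1s_subr rtranclp_trans)
qed auto

lemma R1s_E: "(R1 b)\<^sup>*\<^sup>* x y \<Longrightarrow> E b x y"
  by (induction rule: rtranclp_induct) (auto intro: E_refl E_trans R1_E)

lemma R1_ssub: "R1 b x y \<Longrightarrow> R1 b (ssub s x) (ssub s y)"
  by (induction arbitrary: s rule: R1.induct) (auto intro: R1.intros A_ssub)

lemma R1s_ssub: "(R1 b)\<^sup>*\<^sup>* x y \<Longrightarrow> (R1 b)\<^sup>*\<^sup>* (ssub s x) (ssub s y)"
  by (induction rule: rtranclp_induct) (auto intro: rtranclp.rtrancl_into_rtrancl R1_ssub)

lemma E_ssub: "E b x y \<Longrightarrow> E b (ssub s x) (ssub s y)"
  by (meson E_R1s R1s_E R1s_ssub)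

lemma E_ren: "E b x y \<Longrightarrow> E b (ren f x) (ren f y)"
  by (simp add: ren_ssub E_ssub)

lemma E_lift: "E b x y \<Longrightarrow> E b (lift k x) (lift k y)"
  by (simp add: lift_ren E_ren)

lemma E_liftn: "E b x y \<Longrightarrow> E b ((lift 0 ^^ n) x) ((lift 0 ^^ n) y)"
  by (induction n) (auto intro: E_lift)

lemma E_ssub_pw: "(\<And>i. E b (s i) (r i)) \<Longrightarrow> E b (ssub s t) (ssub r t)"
proof (induction t arbitrary: s r)
  case (Var x) then show ?case by simp
next
  case (Lam t)
  have "E b (ssub (exts s) t) (ssub (exts r) t)"
    by (rule Lam.IH) (auto simp: exts_def E_refl Lam.prems E_ren split: nat.split)
  then show ?case by (simp add: E_lam)
next
  case (App t u)
  show ?case by (simp add: E_app App.IH App.prems)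
next
  case (Sub t u)
  have "E b (ssub (exts s) t) (ssub (exts r) t)"
    by (rule Sub.IH(1)) (auto simp: exts_def E_refl Sub.prems E_ren split: nat.split)
  then show ?case by (simp add: E_sub Sub.IH(2) Sub.prems)
qed

lemma E_jumps: "E b x y \<Longrightarrow> E b (jumps x L) (jumps y L)"
  by (induction L arbitrary: x y) (auto intro: E_sub E_refl)

lemma R1_jumps: "R1 b x y \<Longrightarrow> R1 b (jumps x L) (jumps y L)"
  by (induction L arbitrary: x y) (auto intro: R1.intros)

lemma R1_occ: "R1 b x y \<Longrightarrow> occ k x = occ k y"
  by (induction arbitrary: k rule: R1.induct) (auto dest: A_occ)

lemma R1_fv: "R1 b x y \<Longrightarrow> j \<in> fv x \<longleftrightarrow> j \<in> fv y"
  using R1_occ occ_fv by metis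

lemma R1_ren_refl: "R1 b (ren f x') y \<Longrightarrow> \<exists>y'. R1 b x' y' \<and> y = ren f y'"
proof (induction "ren f x'" y arbitrary: f x' rule: R1.induct)
  case (r_ax y) then show ?case by (meson A_ren_refl R1.r_ax)
next
  case (r_lam t t') then show ?case by (metis R1.r_lam ren_Lam ren.simps(2))
next
  case (r_appl t t' u) then show ?case by (metis R1.r_appl ren_App ren.simps(3))
next
  case (r_appr u u' t) then show ?case by (metis R1.r_appr ren_App ren.simps(3))
next
  case (r_subl t t' u) then show ?case by (metis R1.r_subl ren_Sub ren.simps(4))
next
  case (r_subr u u' t) then show ?case by (metis R1.r_subr ren_Sub ren.simps(4))
qed




lemma swap_liftlift: "ssub (Var \<circ> swapf 0) (lift 0 (lift 0 u)) = lift 0 (lift 0 u)"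
  by (simp add: NORM) (auto intro!: ssub_cong simp: FD NORM split: nat.split)

lemma A_jumps: "A b (jumps (Lam t) L) X \<Longrightarrow> \<exists>t0 L0. X = jumps (Lam t0) L0 \<and>
   (\<forall>u. E b (jumps (Sub t ((lift 0 ^^ length L) u)) L) (jumps (Sub t0 ((lift 0 ^^ length L0) u)) L0))"
proof (induction "jumps (Lam t) L" X rule: A.induct)
  case (aCS a s v)
  from jumps_Sub[OF aCS[symmetric]] obtain L1 where L: "L = L1 @ [v]" and 1: "Sub a (lift 0 s) = jumps (Lam t) L1"
    by blast
  from jumps_Sub[OF 1[symmetric]] obtain L2 where L1: "L1 = L2 @ [lift 0 s]" and a: "a = jumps (Lam t) L2"
    by blast
  define \<sigma> where "\<sigma> = Var \<circ> swapf 0"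
  define n where "n = length L2"
  define t0 where "t0 = ssub (exts ((exts ^^ n) \<sigma>)) t"
  have sw: "swap 0 x = ssub \<sigma> x" for x by (simp add: \<sigma>_def swap_ren ren_ssub)
  have X: "Sub (Sub (swap 0 a) (lift 0 v)) s = jumps (Lam t0) (sL \<sigma> L2 @ [lift 0 v, s])"
    by (simp add: a sw ssub_jumps jumps_snoc[symmetric] t0_def n_def)
  show ?case
  proof (intro exI conjI allI)
    show "Sub (Sub (swap 0 a) (lift 0 v)) s = jumps (Lam t0) (sL \<sigma> L2 @ [lift 0 v, s])" by (rule X)
    fix u
    define W where "W = (lift 0 ^^ n) (lift 0 (lift 0 u))"
    have W1: "(lift 0 ^^ length L) u = W" by (simp add: L L1 W_def n_def funpow_Suc_right del: funpow.simps)
    have W2: "(lift 0 ^^ length (sL \<sigma> L2 @ [lift 0 v, s])) u = W" by (simp add: W_def n_def funpow_Suc_right del: funpow.simps)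
    have W3: "ssub ((exts ^^ n) \<sigma>) W = W"
      by (simp add: W_def ssub_liftn \<sigma>_def swap_liftlift)
    have "A b (Sub (Sub (jumps (Sub t W) L2) (lift 0 s)) v) (Sub (Sub (swap 0 (jumps (Sub t W) L2)) (lift 0 v)) s)"
      by (rule A.aCS)
    moreover have "swap 0 (jumps (Sub t W) L2) = jumps (Sub t0 W) (sL \<sigma> L2)"
      by (simp add: sw ssub_jumps t0_def n_def[symmetric] W3)
    ultimately show "E b (jumps (Sub t ((lift 0 ^^ length L) u)) L) (jumps (Sub t0 ((lift 0 ^^ length (sL \<sigma> L2 @ [lift 0 v, s])) u)) (sL \<sigma> L2 @ [lift 0 v, s]))"
      unfolding W1 W2 by (simp add: L L1 jumps_snoc[symmetric] A_E)
  qed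
next
  case (aLF a s)
  from jumps_Lam[OF aLF(2)[symmetric]] have L: "L = []" and t: "t = Sub a (lift 0 s)" by auto
  show ?case
  proof (intro exI conjI allI)
    show "Sub (Lam (swap 0 a)) s = jumps (Lam (swap 0 a)) [s]" by simp
    fix u show "E b (jumps (Sub t ((lift 0 ^^ length L) u)) L) (jumps (Sub (swap 0 a) ((lift 0 ^^ length [s]) u)) [s])"
      using A.aCS[of b a s u] by (simp add: L t A_E)
  qed
next
  case (aLB a s)
  from jumps_Sub[OF aLB(2)[symmetric]] obtain L1 where L: "L = L1 @ [s]" and 1: "Lam a = jumps (Lam t) L1"
    by blast
  from jumps_Lam[OF 1[symmetric]] have L1: "L1 = []" and a: "a = t" by auto
  show ?case
  proof (intro exI conjI allI)
    show "Lam (Sub (swap 0 a) (lift 0 s)) = jumps (Lam (Sub (swap 0 a) (lift 0 s))) []" by simp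
    fix u show "E b (jumps (Sub t ((lift 0 ^^ length L) u)) L) (jumps (Sub (Sub (swap 0 a) (lift 0 s)) ((lift 0 ^^ length []) u)) [])"
      using A.aCS[of b t u s] by (simp add: L L1 a A_E)
  qed
next
  case (aAF a s v) then show ?case using jumps_App by metis
next
  case (aAB a v s)
  from jumps_Sub[OF aAB(2)[symmetric]] obtain L1 where "App a (lift 0 v) = jumps (Lam t) L1" by blast
  then show ?case using jumps_App by metis
qed




lemma ID1: "swap 0 (lift (Suc 0) t) = lift 0 t"
  by (simp add: NORM) (auto intro!: ssub_cong simp: FD NORM split: nat.split)
lemma ID1b: "swap 0 (lift 0 t) = lift (Suc 0) t"
  by (metis ID1 swap_swap)
lemma ID2: "subst (Suc k) u (swap k t) = subst k u t"
  by (simp add: NORM) (auto intro!: ssub_cong simp: FD NORM split: nat.split)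
lemma ID2b: "subst k u (swap k t) = subst (Suc k) u t"
  by (metis ID2 swap_swap)
lemma ID3: "subst 0 s (lift 0 v) = v"
  by (simp add: NORM) (auto intro!: ssub_idI' simp: FD NORM split: nat.split)
lemma ID4: "ren (shf (colf 0)) (swap 0 (swap (Suc 0) t)) = swap 0 (ren (colf 0) t)"
  by (simp add: NORM) (auto intro!: ssub_cong simp: FD NORM shf_def split: nat.split)
lemma ID5: "ren (colf 0) (swap (Suc 0) (swap 0 t)) = swap 0 (ren (shf (colf 0)) t)"
  by (simp add: NORM) (auto intro!: ssub_cong simp: FD NORM shf_def split: nat.split)
lemma ID6: "ren (colf 0) (lift 0 (lift 0 v)) = lift 0 v"
  by (simp add: NORM) (auto intro!: ssub_cong simp: FD NORM shf_def split: nat.split)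
lemma ID7: "swap 0 (lift 0 (lift 0 v)) = lift 0 (lift 0 v)"
  by (simp add: NORM) (auto intro!: ssub_cong simp: FD NORM shf_def split: nat.split)

lemma occ_swap1_0: "occ 0 (swap (Suc 0) x) = occ 0 x"
  by (simp add: swap_ren) (rule occ_ren, auto simp: swapf_def)
lemma occ_swap1_1: "occ (Suc 0) (swap (Suc 0) x) = occ (Suc (Suc 0)) x"
  by (simp add: swap_ren) (rule occ_ren, auto simp: swapf_def)
lemma occ_swap1_2: "occ (Suc (Suc 0)) (swap (Suc 0) x) = occ (Suc 0) x"
  by (simp add: swap_ren) (rule occ_ren, auto simp: swapf_def)

lemma ren_col_lift: "ren (colf 0) S = lift 0 s \<Longrightarrow> S = lift 0 (lift 0 s)"
proof -
  assume a: "ren (colf 0) S = lift 0 s"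
  have "0 \<notin> fv S"
  proof
    assume "0 \<in> fv S" then have "0 \<in> fv (ren (colf 0) S)" by (simp add: fv_ren) (rule bexI[of _ 0], auto simp: colf_def)
    then show False using a notin_lift by metis
  qed
  then obtain S1 where S1: "S = lift 0 S1" using notin_ex by blast
  have "0 \<notin> fv S1"
  proof
    assume "0 \<in> fv S1" then have "Suc 0 \<in> fv S" unfolding S1 by (simp add: fv_ren lift0)
    then have "0 \<in> fv (ren (colf 0) S)" by (simp add: fv_ren) (rule bexI[of _ "Suc 0"], auto simp: colf_def)
    then show False using a notin_lift by metis
  qed
  then obtain s2 where S2: "S1 = lift 0 s2" using notin_ex by blast
  from a have "lift 0 s2 = lift 0 s" by (simp add: S1 S2 ID6)
  then show ?thesis using S1 S2 lift_inj by metis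
qed

lemma lift0_Sub: "lift 0 X = Sub a b \<Longrightarrow> \<exists>a' b'. X = Sub a' b' \<and> a = lift (Suc 0) a' \<and> b = lift 0 b'"
  by (cases X) auto
lemma lift0_Lam: "lift 0 X = Lam a \<Longrightarrow> \<exists>a'. X = Lam a' \<and> a = lift (Suc 0) a'"
  by (cases X) auto
lemma lift0_App: "lift 0 X = App a b \<Longrightarrow> \<exists>a' b'. X = App a' b' \<and> a = lift 0 a' \<and> b = lift 0 b'"
  by (cases X) auto

lemma st_w: "step (Sub (lift 0 a) u) a" by (intro step_root root_w')


lemma step_LamE: "step (Lam t) X \<Longrightarrow> \<exists>t'. X = Lam t' \<and> step t t'"
  by (erule step.cases) (auto simp: root_Lam)
lemma step_AppE: "step (App t u) X \<Longrightarrow> root (App t u) X \<or> (\<exists>t'. X = App t' u \<and> step t t') \<or> (\<exists>u'. X = App t u' \<and> step u u')"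
  by (erule step.cases) auto
lemma step_SubE: "step (Sub t u) X \<Longrightarrow> root (Sub t u) X \<or> (\<exists>t'. X = Sub t' u \<and> step t t') \<or> (\<exists>u'. X = Sub t u' \<and> step u u')"
  by (erule step.cases) auto

lemmas occsimps = occs occ_swap1_0 occ_swap1_1 occ_swap1_2

lemma sim_CS: "step (Sub (Sub t (lift 0 s)) v) x' \<Longrightarrow>
  \<exists>y'. step (Sub (Sub (swap 0 t) (lift 0 v)) s) y' \<and> E b x' y'"
proof -
  assume st: "step (Sub (Sub t (lift 0 s)) v) x'"
  from step_SubE[OF st] show ?thesis
  proof (elim disjE exE conjE)
    assume "root (Sub (Sub t (lift 0 s)) v) x'"
    from root_SubE[OF this] show ?thesis
    proof (elim disjE exE conjE)
      fix t0 assume h: "Sub t (lift 0 s) = lift 0 t0" and x': "x' = t0"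
      from lift0_Sub[OF h[symmetric]] obtain a b' where t0: "t0 = Sub a b'" and t: "t = lift (Suc 0) a"
        and "lift 0 s = lift 0 b'" by blast
      then have b': "b' = s" using lift_inj by metis
      have "step (Sub (Sub (swap 0 t) (lift 0 v)) s) (Sub a s)"
        by (simp add: t ID1 step_subl st_w)
      then show ?thesis by (auto simp: x' t0 b' intro: E_refl)
    next
      assume o: "occ 0 (Sub t (lift 0 s)) = 1" and x': "x' = subst 0 v (Sub t (lift 0 s))"
      have o1: "occ (Suc 0) t = 1" using o by (simp add: occsimps)
      have "step (Sub (Sub (swap 0 t) (lift 0 v)) s) (Sub (subst 0 (lift 0 v) (swap 0 t)) s)"
        using o1 by (intro step_subl step_root root.d) (simp add: occsimps)
      then show ?thesis by (auto simp: x' ID3 ID2b intro: E_refl)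
    next
      fix T' assume h: "Sub t (lift 0 s) = ren (colf 0) T'" and o0: "1 \<le> occ 0 T'" and o1: "1 \<le> occ (Suc 0) T'"
        and x': "x' = Sub (Sub T' (lift 0 v)) v"
      from ren_Sub[OF h[symmetric]] obtain t2 S2 where T': "T' = Sub t2 S2" and t: "t = ren (shf (colf 0)) t2"
        and S: "lift 0 s = ren (colf 0) S2" by blast
      have S2: "S2 = lift 0 (lift 0 s)" using ren_col_lift S by metis
      have p0: "1 \<le> occ (Suc 0) t2" using o0 by (simp add: T' S2 occsimps)
      have p1: "1 \<le> occ (Suc (Suc 0)) t2" using o1 by (simp add: T' S2 occsimps)
      define y' where "y' = Sub (Sub (Sub (swap (Suc 0) (swap 0 t2)) (lift 0 (lift 0 v))) (lift 0 v)) s"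
      have "step (Sub (Sub (ren (colf 0) (swap (Suc 0) (swap 0 t2))) (lift 0 v)) s) y'"
        unfolding y'_def using p0 p1 by (intro step_subl step_root root_c') (simp_all add: occsimps)
      then have st': "step (Sub (Sub (swap 0 t) (lift 0 v)) s) y'" by (simp add: ID5 t)
      have e1: "E b x' (Sub (Sub (Sub (swap 0 t2) (lift 0 (lift 0 v))) (lift 0 s)) v)"
        unfolding x' T' S2 by (intro E_sub E_refl A_E A.aCS)
      have e2: "E b (Sub (Sub (Sub (swap 0 t2) (lift 0 (lift 0 v))) (lift 0 s)) v) y'"
        using A_E[OF A.aCS[of b "Sub (swap 0 t2) (lift 0 (lift 0 v))" s v]] by (simp add: y'_def ID7)
      from st' e1 e2 show ?thesis by (blast intro: E_trans)
    qed
  next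
    fix X assume x': "x' = Sub X v" and sX: "step (Sub t (lift 0 s)) X"
    from step_SubE[OF sX] show ?thesis
    proof (elim disjE exE conjE)
      assume "root (Sub t (lift 0 s)) X"
      from root_SubE[OF this] show ?thesis
      proof (elim disjE exE conjE)
        fix t0 assume t: "t = lift 0 t0" and X: "X = t0"
        have "Sub (Sub (swap 0 t) (lift 0 v)) s = Sub (lift 0 (Sub t0 v)) s" by (simp add: t ID1b)
        then have "step (Sub (Sub (swap 0 t) (lift 0 v)) s) (Sub t0 v)" using st_w[of "Sub t0 v" s] by (simp only:)
        then show ?thesis by (auto simp: x' X intro: E_refl)
      next
        assume o: "occ 0 t = 1" and X: "X = subst 0 (lift 0 s) t"
        have "step (Sub (Sub (swap 0 t) (lift 0 v)) s) (subst 0 s (Sub (swap 0 t) (lift 0 v)))"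
          using o by (intro step_root root.d) (simp add: occsimps)
        then show ?thesis by (auto simp: x' X ID2 ID3 intro: E_refl)
      next
        fix t1 assume t: "t = ren (colf 0) t1" and o0: "1 \<le> occ 0 t1" and o1: "1 \<le> occ (Suc 0) t1"
          and X: "X = Sub (Sub t1 (lift 0 (lift 0 s))) (lift 0 s)"
        define y' where "y' = Sub (Sub (Sub (swap 0 (swap (Suc 0) t1)) (lift 0 (lift 0 v))) (lift 0 s)) s"
        have "Sub (swap 0 t) (lift 0 v) = ren (colf 0) (Sub (swap 0 (swap (Suc 0) t1)) (lift 0 (lift 0 v)))"
          by (simp add: t ID4 ID6)
        moreover have "step (Sub (ren (colf 0) (Sub (swap 0 (swap (Suc 0) t1)) (lift 0 (lift 0 v)))) s) y'"
          unfolding y'_def using o0 o1 by (intro step_root root_c') (simp_all add: occsimps)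
        ultimately have st': "step (Sub (Sub (swap 0 t) (lift 0 v)) s) y'" by simp
        have e1: "E b x' (Sub (Sub (Sub (swap (Suc 0) t1) (lift 0 (lift 0 s))) (lift 0 v)) s)"
          using A_E[OF A.aCS[of b "Sub t1 (lift 0 (lift 0 s))" s v]] by (simp add: x' X ID7)
        have e2: "E b (Sub (Sub (Sub (swap (Suc 0) t1) (lift 0 (lift 0 s))) (lift 0 v)) s) y'"
          unfolding y'_def by (intro E_sub E_refl A_E A.aCS)
        from st' e1 e2 show ?thesis by (blast intro: E_trans)
      qed
    next
      fix t1 assume X: "X = Sub t1 (lift 0 s)" and s1: "step t t1"
      have "step (Sub (Sub (swap 0 t) (lift 0 v)) s) (Sub (Sub (swap 0 t1) (lift 0 v)) s)"
        using s1 by (intro step_subl step_swap)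
      moreover have "E b x' (Sub (Sub (swap 0 t1) (lift 0 v)) s)" unfolding x' X by (intro A_E A.aCS)
      ultimately show ?thesis by blast
    next
      fix S1 assume X: "X = Sub t S1" and s1: "step (lift 0 s) S1"
      from step_lift_inv[OF s1] obtain s2 where S1: "S1 = lift 0 s2" and s2: "step s s2" by blast
      have "step (Sub (Sub (swap 0 t) (lift 0 v)) s) (Sub (Sub (swap 0 t) (lift 0 v)) s2)"
        using s2 by (intro step_subr)
      moreover have "E b x' (Sub (Sub (swap 0 t) (lift 0 v)) s2)" unfolding x' X S1 by (intro A_E A.aCS)
      ultimately show ?thesis by blast
    qed
  next
    fix v1 assume x': "x' = Sub (Sub t (lift 0 s)) v1" and s1: "step v v1"
    have "step (Sub (Sub (swap 0 t) (lift 0 v)) s) (Sub (Sub (swap 0 t) (lift 0 v1)) s)"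
      using s1 by (intro step_subl step_subr step_lift)
    moreover have "E b x' (Sub (Sub (swap 0 t) (lift 0 v1)) s)" unfolding x' by (intro A_E A.aCS)
    ultimately show ?thesis by blast
  qed
qed


lemma sim_LF: "b \<Longrightarrow> step (Lam (Sub t (lift 0 s))) x' \<Longrightarrow>
  \<exists>y'. step (Sub (Lam (swap 0 t)) s) y' \<and> E b x' y'"
proof -
  assume b: b and st: "step (Lam (Sub t (lift 0 s))) x'"
  from step_LamE[OF st] obtain X where x': "x' = Lam X" and sX: "step (Sub t (lift 0 s)) X" by blast
  from step_SubE[OF sX] show ?thesis
  proof (elim disjE exE conjE)
    assume "root (Sub t (lift 0 s)) X"
    from root_SubE[OF this] show ?thesis
    proof (elim disjE exE conjE)
      fix t0 assume t: "t = lift 0 t0" and X: "X = t0"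
      have "Sub (Lam (swap 0 t)) s = Sub (lift 0 (Lam t0)) s" by (simp add: t ID1b)
      then have "step (Sub (Lam (swap 0 t)) s) (Lam t0)" using st_w[of "Lam t0" s] by (simp only:)
      then show ?thesis by (auto simp: x' X intro: E_refl)
    next
      assume o: "occ 0 t = 1" and X: "X = subst 0 (lift 0 s) t"
      have "step (Sub (Lam (swap 0 t)) s) (subst 0 s (Lam (swap 0 t)))"
        using o by (intro step_root root.d) (simp add: occsimps)
      then show ?thesis by (auto simp: x' X ID2 intro: E_refl)
    next
      fix t1 assume t: "t = ren (colf 0) t1" and o0: "1 \<le> occ 0 t1" and o1: "1 \<le> occ (Suc 0) t1"
        and X: "X = Sub (Sub t1 (lift 0 (lift 0 s))) (lift 0 s)"
      define y' where "y' = Sub (Sub (Lam (swap 0 (swap (Suc 0) t1))) (lift 0 s)) s"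
      have "Lam (swap 0 t) = ren (colf 0) (Lam (swap 0 (swap (Suc 0) t1)))"
        by (simp add: t ID4)
      moreover have "step (Sub (ren (colf 0) (Lam (swap 0 (swap (Suc 0) t1)))) s) y'"
        unfolding y'_def using o0 o1 by (intro step_root root_c') (simp_all add: occsimps)
      ultimately have st': "step (Sub (Lam (swap 0 t)) s) y'" by simp
      have e1: "E b x' (Sub (Lam (Sub (swap (Suc 0) t1) (lift 0 (lift 0 s)))) s)"
        using A_E[OF A.aLF[of b "Sub t1 (lift 0 (lift 0 s))" s]] \<open>b\<close> by (simp add: x' X ID7)
      have e2: "E b (Sub (Lam (Sub (swap (Suc 0) t1) (lift 0 (lift 0 s)))) s) y'"
        unfolding y'_def using \<open>b\<close> by (intro E_sub E_refl A_E A.aLF)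
      from st' e1 e2 show ?thesis by (blast intro: E_trans)
    qed
  next
    fix t1 assume X: "X = Sub t1 (lift 0 s)" and s1: "step t t1"
    have "step (Sub (Lam (swap 0 t)) s) (Sub (Lam (swap 0 t1)) s)"
      using s1 by (intro step_subl step_lam step_swap)
    moreover have "E b x' (Sub (Lam (swap 0 t1)) s)" unfolding x' X using \<open>b\<close> by (intro A_E A.aLF)
    ultimately show ?thesis by blast
  next
    fix S1 assume X: "X = Sub t S1" and s1: "step (lift 0 s) S1"
    from step_lift_inv[OF s1] obtain s2 where S1: "S1 = lift 0 s2" and s2: "step s s2" by blast
    have "step (Sub (Lam (swap 0 t)) s) (Sub (Lam (swap 0 t)) s2)" using s2 by (intro step_subr)
    moreover have "E b x' (Sub (Lam (swap 0 t)) s2)" unfolding x' X S1 using \<open>b\<close> by (intro A_E A.aLF)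
    ultimately show ?thesis by blast
  qed
qed


lemma sim_LB: "b \<Longrightarrow> step (Sub (Lam t) s) x' \<Longrightarrow>
  \<exists>y'. step (Lam (Sub (swap 0 t) (lift 0 s))) y' \<and> E b x' y'"
proof -
  assume b: b and st: "step (Sub (Lam t) s) x'"
  from step_SubE[OF st] show ?thesis
  proof (elim disjE exE conjE)
    assume "root (Sub (Lam t) s) x'"
    from root_SubE[OF this] show ?thesis
    proof (elim disjE exE conjE)
      fix t0 assume h: "Lam t = lift 0 t0" and x': "x' = t0"
      from lift0_Lam[OF h[symmetric]] obtain a where t0: "t0 = Lam a" and t: "t = lift (Suc 0) a" by blast
      have "step (Lam (Sub (swap 0 t) (lift 0 s))) (Lam a)"
        by (simp add: t ID1 step_lam st_w)
      then show ?thesis by (auto simp: x' t0 intro: E_refl)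
    next
      assume o: "occ 0 (Lam t) = 1" and x': "x' = subst 0 s (Lam t)"
      have "step (Lam (Sub (swap 0 t) (lift 0 s))) (Lam (subst 0 (lift 0 s) (swap 0 t)))"
        using o by (intro step_lam step_root root.d) (simp add: occsimps)
      then show ?thesis by (auto simp: x' ID2b intro: E_refl)
    next
      fix T' assume h: "Lam t = ren (colf 0) T'" and o0: "1 \<le> occ 0 T'" and o1: "1 \<le> occ (Suc 0) T'"
        and x': "x' = Sub (Sub T' (lift 0 s)) s"
      from ren_Lam[OF h[symmetric]] obtain t2 where T': "T' = Lam t2" and t: "t = ren (shf (colf 0)) t2"
        by blast
      have p0: "1 \<le> occ (Suc 0) t2" using o0 by (simp add: T')
      have p1: "1 \<le> occ (Suc (Suc 0)) t2" using o1 by (simp add: T')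
      define y' where "y' = Lam (Sub (Sub (swap (Suc 0) (swap 0 t2)) (lift 0 (lift 0 s))) (lift 0 s))"
      have "step (Lam (Sub (ren (colf 0) (swap (Suc 0) (swap 0 t2))) (lift 0 s))) y'"
        unfolding y'_def using p0 p1 by (intro step_lam step_root root_c') (simp_all add: occsimps)
      then have st': "step (Lam (Sub (swap 0 t) (lift 0 s))) y'" by (simp add: ID5 t)
      have e1: "E b x' (Sub (Lam (Sub (swap 0 t2) (lift 0 (lift 0 s)))) s)"
        unfolding x' T' using b by (intro E_sub E_refl A_E A.aLB)
      have e2: "E b (Sub (Lam (Sub (swap 0 t2) (lift 0 (lift 0 s)))) s) y'"
        using A_E[OF A.aLB[of b "Sub (swap 0 t2) (lift 0 (lift 0 s))" s]] b by (simp add: y'_def ID7)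
      from st' e1 e2 show ?thesis by (blast intro: E_trans)
    qed
  next
    fix X assume x': "x' = Sub X s" and sX: "step (Lam t) X"
    from step_LamE[OF sX] obtain t1 where X: "X = Lam t1" and s1: "step t t1" by blast
    have "step (Lam (Sub (swap 0 t) (lift 0 s))) (Lam (Sub (swap 0 t1) (lift 0 s)))"
      using s1 by (intro step_lam step_subl step_swap)
    moreover have "E b x' (Lam (Sub (swap 0 t1) (lift 0 s)))" unfolding x' X using b by (intro A_E A.aLB)
    ultimately show ?thesis by blast
  next
    fix s1 assume x': "x' = Sub (Lam t) s1" and s1: "step s s1"
    have "step (Lam (Sub (swap 0 t) (lift 0 s))) (Lam (Sub (swap 0 t) (lift 0 s1)))"
      using s1 by (intro step_lam step_subr step_lift)
    moreover have "E b x' (Lam (Sub (swap 0 t) (lift 0 s1)))" unfolding x' using b by (intro A_E A.aLB)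
    ultimately show ?thesis by blast
  qed
qed

lemma sim_AF: "b \<Longrightarrow> step (App (Sub t s) v) x' \<Longrightarrow>
  \<exists>y'. step (Sub (App t (lift 0 v)) s) y' \<and> E b x' y'"
proof -
  assume b: b and st: "step (App (Sub t s) v) x'"
  from step_AppE[OF st] show ?thesis
  proof (elim disjE exE conjE)
    assume "root (App (Sub t s) v) x'"
    from root_AppE[OF this] obtain t0 L where h: "Sub t s = jumps (Lam t0) L"
      and x': "x' = jumps (Sub t0 ((lift 0 ^^ length L) v)) L" by blast
    from jumps_Sub[OF h[symmetric]] obtain L1 where L: "L = L1 @ [s]" and t: "t = jumps (Lam t0) L1" by blast
    have "step (Sub (App t (lift 0 v)) s) (Sub (jumps (Sub t0 ((lift 0 ^^ length L1) (lift 0 v))) L1) s)"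
      unfolding t by (intro step_subl step_root root.dB)
    moreover have "x' = Sub (jumps (Sub t0 ((lift 0 ^^ length L1) (lift 0 v))) L1) s"
      by (simp add: x' L jumps_snoc funpow_Suc_right del: funpow.simps)
    ultimately show ?thesis by (blast intro: E_refl)
  next
    fix X assume x': "x' = App X v" and sX: "step (Sub t s) X"
    from step_SubE[OF sX] show ?thesis
    proof (elim disjE exE conjE)
      assume "root (Sub t s) X"
      from root_SubE[OF this] show ?thesis
      proof (elim disjE exE conjE)
        fix t0 assume t: "t = lift 0 t0" and X: "X = t0"
        have "Sub (App t (lift 0 v)) s = Sub (lift 0 (App t0 v)) s" by (simp add: t)
        then have "step (Sub (App t (lift 0 v)) s) (App t0 v)" using st_w[of "App t0 v" s] by (simp only:)
        then show ?thesis by (auto simp: x' X intro: E_refl)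
      next
        assume o: "occ 0 t = 1" and X: "X = subst 0 s t"
        have "step (Sub (App t (lift 0 v)) s) (subst 0 s (App t (lift 0 v)))"
          using o by (intro step_root root.d) (simp add: occsimps)
        then show ?thesis by (auto simp: x' X ID3 intro: E_refl)
      next
        fix t1 assume t: "t = ren (colf 0) t1" and o0: "1 \<le> occ 0 t1" and o1: "1 \<le> occ (Suc 0) t1"
          and X: "X = Sub (Sub t1 (lift 0 s)) s"
        define y' where "y' = Sub (Sub (App t1 (lift 0 (lift 0 v))) (lift 0 s)) s"
        have "App t (lift 0 v) = ren (colf 0) (App t1 (lift 0 (lift 0 v)))"
          by (simp add: t ID6)
        moreover have "step (Sub (ren (colf 0) (App t1 (lift 0 (lift 0 v)))) s) y'"
          unfolding y'_def using o0 o1 by (intro step_root root_c') (simp_all add: occsimps)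
        ultimately have st': "step (Sub (App t (lift 0 v)) s) y'" by simp
        have e1: "E b x' (Sub (App (Sub t1 (lift 0 s)) (lift 0 v)) s)"
          unfolding x' X using b by (intro A_E A.aAF)
        have e2: "E b (Sub (App (Sub t1 (lift 0 s)) (lift 0 v)) s) y'"
          unfolding y'_def using b by (intro E_sub E_refl A_E A.aAF)
        from st' e1 e2 show ?thesis by (blast intro: E_trans)
      qed
    next
      fix t1 assume X: "X = Sub t1 s" and s1: "step t t1"
      have "step (Sub (App t (lift 0 v)) s) (Sub (App t1 (lift 0 v)) s)"
        using s1 by (intro step_subl step_appl)
      moreover have "E b x' (Sub (App t1 (lift 0 v)) s)" unfolding x' X using b by (intro A_E A.aAF)
      ultimately show ?thesis by blast
    next
      fix s1 assume X: "X = Sub t s1" and s1: "step s s1"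
      have "step (Sub (App t (lift 0 v)) s) (Sub (App t (lift 0 v)) s1)" using s1 by (intro step_subr)
      moreover have "E b x' (Sub (App t (lift 0 v)) s1)" unfolding x' X using b by (intro A_E A.aAF)
      ultimately show ?thesis by blast
    qed
  next
    fix v1 assume x': "x' = App (Sub t s) v1" and s1: "step v v1"
    have "step (Sub (App t (lift 0 v)) s) (Sub (App t (lift 0 v1)) s)"
      using s1 by (intro step_subl step_appr step_lift)
    moreover have "E b x' (Sub (App t (lift 0 v1)) s)" unfolding x' using b by (intro A_E A.aAF)
    ultimately show ?thesis by blast
  qed
qed

lemma sim_AB: "b \<Longrightarrow> step (Sub (App t (lift 0 v)) s) x' \<Longrightarrow>
  \<exists>y'. step (App (Sub t s) v) y' \<and> E b x' y'"
proof -
  assume b: b and st: "step (Sub (App t (lift 0 v)) s) x'"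
  from step_SubE[OF st] show ?thesis
  proof (elim disjE exE conjE)
    assume "root (Sub (App t (lift 0 v)) s) x'"
    from root_SubE[OF this] show ?thesis
    proof (elim disjE exE conjE)
      fix t0 assume h: "App t (lift 0 v) = lift 0 t0" and x': "x' = t0"
      from lift0_App[OF h[symmetric]] obtain a c where t0: "t0 = App a c" and t: "t = lift 0 a"
        and "lift 0 v = lift 0 c" by blast
      then have c: "c = v" using lift_inj by metis
      have "step (App (Sub t s) v) (App a v)" by (simp add: t step_appl st_w)
      then show ?thesis by (auto simp: x' t0 c intro: E_refl)
    next
      assume o: "occ 0 (App t (lift 0 v)) = 1" and x': "x' = subst 0 s (App t (lift 0 v))"
      have "step (App (Sub t s) v) (App (subst 0 s t) v)"
        using o by (intro step_appl step_root root.d) (simp add: occsimps)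
      then show ?thesis by (auto simp: x' ID3 intro: E_refl)
    next
      fix T' assume h: "App t (lift 0 v) = ren (colf 0) T'" and o0: "1 \<le> occ 0 T'" and o1: "1 \<le> occ (Suc 0) T'"
        and x': "x' = Sub (Sub T' (lift 0 s)) s"
      from ren_App[OF h[symmetric]] obtain t2 V2 where T': "T' = App t2 V2" and t: "t = ren (colf 0) t2"
        and V: "lift 0 v = ren (colf 0) V2" by blast
      have V2: "V2 = lift 0 (lift 0 v)" using ren_col_lift V by metis
      have p0: "1 \<le> occ 0 t2" using o0 by (simp add: T' V2 occsimps)
      have p1: "1 \<le> occ (Suc 0) t2" using o1 by (simp add: T' V2 occsimps)
      define y' where "y' = App (Sub (Sub t2 (lift 0 s)) s) v"
      have st': "step (App (Sub t s) v) y'"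
        unfolding y'_def t using p0 p1 by (intro step_appl step_root root_c')
      have e1: "E b x' (Sub (App (Sub t2 (lift 0 s)) (lift 0 v)) s)"
        unfolding x' T' V2 using b by (intro E_sub E_refl A_E A.aAB)
      have e2: "E b (Sub (App (Sub t2 (lift 0 s)) (lift 0 v)) s) y'"
        unfolding y'_def using b by (intro A_E A.aAB)
      from st' e1 e2 show ?thesis by (blast intro: E_trans)
    qed
  next
    fix X assume x': "x' = Sub X s" and sX: "step (App t (lift 0 v)) X"
    from step_AppE[OF sX] show ?thesis
    proof (elim disjE exE conjE)
      assume "root (App t (lift 0 v)) X"
      from root_AppE[OF this] obtain t0 L where t: "t = jumps (Lam t0) L"
        and X: "X = jumps (Sub t0 ((lift 0 ^^ length L) (lift 0 v))) L" by blast
      have "step (App (Sub t s) v) (jumps (Sub t0 ((lift 0 ^^ length (L @ [s])) v)) (L @ [s]))"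
        using step_root[OF root.dB[of t0 "L @ [s]" v]] by (simp add: t jumps_snoc)
      moreover have "jumps (Sub t0 ((lift 0 ^^ length (L @ [s])) v)) (L @ [s]) = x'"
        by (simp add: x' X jumps_snoc funpow_Suc_right del: funpow.simps)
      ultimately show ?thesis by (blast intro: E_refl)
    next
      fix t1 assume X: "X = App t1 (lift 0 v)" and s1: "step t t1"
      have "step (App (Sub t s) v) (App (Sub t1 s) v)" using s1 by (intro step_appl step_subl)
      moreover have "E b x' (App (Sub t1 s) v)" unfolding x' X using b by (intro A_E A.aAB)
      ultimately show ?thesis by blast
    next
      fix V1 assume X: "X = App t V1" and s1: "step (lift 0 v) V1"
      from step_lift_inv[OF s1] obtain v2 where V1: "V1 = lift 0 v2" and s2: "step v v2" by blast
      have "step (App (Sub t s) v) (App (Sub t s) v2)" using s2 by (intro step_appr)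
      moreover have "E b x' (App (Sub t s) v2)" unfolding x' X V1 using b by (intro A_E A.aAB)
      ultimately show ?thesis by blast
    qed
  next
    fix s1 assume x': "x' = Sub (App t (lift 0 v)) s1" and s1: "step s s1"
    have "step (App (Sub t s) v) (App (Sub t s1) v)" using s1 by (intro step_appl step_subr)
    moreover have "E b x' (App (Sub t s1) v)" unfolding x' using b by (intro A_E A.aAB)
    ultimately show ?thesis by blast
  qed
qed

lemma A_sim: "A b x y \<Longrightarrow> step x x' \<Longrightarrow> \<exists>y'. step y y' \<and> E b x' y'"
proof (induction rule: A.induct)
  case (aCS t s v) then show ?case by (rule sim_CS)
next
  case (aLF t s) then show ?case by (intro sim_LF)
next
  case (aLB t s) then show ?case by (intro sim_LB)
next
  case (aAF t s v) then show ?case by (intro sim_AF)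
next
  case (aAB t v s) then show ?case by (intro sim_AB)
qed




lemma JL: "R1 b (jumps (Lam t) L) X \<Longrightarrow> \<exists>t0 L0. X = jumps (Lam t0) L0 \<and>
   (\<forall>u. E b (jumps (Sub t ((lift 0 ^^ length L) u)) L) (jumps (Sub t0 ((lift 0 ^^ length L0) u)) L0))"
proof (induction L arbitrary: X rule: rev_induct)
  case Nil
  then have "R1 b (Lam t) X" by simp
  then show ?case
  proof (cases rule: R1.cases)
    case r_ax then show ?thesis using A_jumps[of b t "[]" X] by simp
  next
    case (r_lam t')
    show ?thesis using r_lam(2) by (intro exI[of _ t'] exI[of _ "[]"]) (auto simp: r_lam(1) intro: E_sub E_refl R1_E)
  qed
next
  case (snoc v L)
  from snoc.prems have "R1 b (Sub (jumps (Lam t) L) v) X" by (simp add: jumps_snoc)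
  then show ?case
  proof (cases rule: R1.cases)
    case r_ax then show ?thesis using A_jumps[of b t "L @ [v]" X] by (simp add: jumps_snoc)
  next
    case (r_subl Y)
    from snoc.IH[OF r_subl(2)] obtain t0 L0 where Y: "Y = jumps (Lam t0) L0"
      and e: "\<And>u. E b (jumps (Sub t ((lift 0 ^^ length L) u)) L) (jumps (Sub t0 ((lift 0 ^^ length L0) u)) L0)"
      by blast
    show ?thesis
    proof (rule exI[of _ t0], rule exI[of _ "L0 @ [v]"], intro conjI allI)
      show "X = jumps (Lam t0) (L0 @ [v])" by (simp add: r_subl Y jumps_snoc)
      fix u
      from e[of "lift 0 u"] show "E b (jumps (Sub t ((lift 0 ^^ length (L @ [v])) u)) (L @ [v]))
          (jumps (Sub t0 ((lift 0 ^^ length (L0 @ [v])) u)) (L0 @ [v]))"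
        by (simp add: jumps_snoc funpow_Suc_right E_sub E_refl del: funpow.simps)
    qed
  next
    case (r_subr v')
    show ?thesis
    proof (rule exI[of _ t], rule exI[of _ "L @ [v']"], intro conjI allI)
      show "X = jumps (Lam t) (L @ [v'])" by (simp add: r_subr jumps_snoc)
      fix u show "E b (jumps (Sub t ((lift 0 ^^ length (L @ [v])) u)) (L @ [v]))
          (jumps (Sub t ((lift 0 ^^ length (L @ [v'])) u)) (L @ [v']))"
        using r_subr by (simp add: jumps_snoc E_sub E_refl R1_E)
    qed
  qed
qed

lemma sim: "R1 b x y \<Longrightarrow> step x x' \<Longrightarrow> \<exists>y'. step y y' \<and> E b x' y'"
proof (induction arbitrary: x' rule: R1.induct)
  case (r_ax x y) then show ?case by (rule A_sim)
next
  case (r_lam t t')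
  then obtain t1 where x': "x' = Lam t1" and st: "step t t1" using step_LamE by blast
  from r_lam.IH[OF st] obtain y1 where "step t' y1" "E b t1 y1" by blast
  then show ?case by (intro exI[of _ "Lam y1"]) (auto simp: x' intro: step.intros E_lam)
next
  case (r_appl t t' u)
  from step_AppE[OF r_appl.prems] show ?case
  proof (elim disjE exE conjE)
    assume "root (App t u) x'"
    then obtain t1 L where t: "t = jumps (Lam t1) L" and x': "x' = jumps (Sub t1 ((lift 0 ^^ length L) u)) L"
      using root_AppE by blast
    from JL[OF r_appl.hyps(1)[unfolded t]] obtain t0 L0 where t': "t' = jumps (Lam t0) L0"
      and e: "\<And>u. E b (jumps (Sub t1 ((lift 0 ^^ length L) u)) L) (jumps (Sub t0 ((lift 0 ^^ length L0) u)) L0)"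
      by blast
    show ?thesis
      by (rule exI[of _ "jumps (Sub t0 ((lift 0 ^^ length L0) u)) L0"])
         (auto simp: t' x' e intro: step_root root.dB)
  next
    fix t1 assume "x' = App t1 u" "step t t1"
    with r_appl.IH obtain y1 where "step t' y1" "E b t1 y1" by blast
    then show ?thesis using \<open>x' = App t1 u\<close> by (intro exI[of _ "App y1 u"]) (auto intro: step.intros E_app E_refl)
  next
    fix u1 assume "x' = App t u1" "step u u1"
    then show ?thesis using r_appl.hyps
      by (intro exI[of _ "App t' u1"]) (auto intro: step.intros R1_E R1.intros)
  qed
next
  case (r_appr u u' t)
  from step_AppE[OF r_appr.prems] show ?case
  proof (elim disjE exE conjE)
    assume "root (App t u) x'"
    then obtain t1 L where t: "t = jumps (Lam t1) L" and x': "x' = jumps (Sub t1 ((lift 0 ^^ length L) u)) L"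
      using root_AppE by blast
    show ?thesis
      by (rule exI[of _ "jumps (Sub t1 ((lift 0 ^^ length L) u')) L"])
         (auto simp: t x' intro!: step_root root.dB E_jumps[OF E_sub[OF E_refl E_liftn[OF R1_E[OF r_appr.hyps]]]])
  next
    fix t1 assume "x' = App t1 u" "step t t1"
    then show ?thesis using r_appr.hyps
      by (intro exI[of _ "App t1 u'"]) (auto intro: step.intros R1_E R1.intros)
  next
    fix u1 assume "x' = App t u1" "step u u1"
    with r_appr.IH obtain y1 where "step u' y1" "E b u1 y1" by blast
    then show ?thesis using \<open>x' = App t u1\<close> by (intro exI[of _ "App t y1"]) (auto intro: step.intros E_app E_refl)
  qed
next
  case (r_subl t t' u)
  from step_SubE[OF r_subl.prems] show ?case
  proof (elim disjE exE conjE)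
    assume "root (Sub t u) x'"
    from root_SubE[OF this] show ?thesis
    proof (elim disjE exE conjE)
      fix t0 assume t: "t = lift 0 t0" and x': "x' = t0"
      from R1_ren_refl[of b Suc t0 t'] r_subl.hyps obtain t0' where "R1 b t0 t0'" "t' = lift 0 t0'"
        by (auto simp: t lift0)
      then show ?thesis
        by (intro exI[of _ t0']) (auto simp: x' intro: step_root root_w' R1_E)
    next
      assume o: "occ 0 t = 1" and x': "x' = subst 0 u t"
      have "occ 0 t' = 1" using o R1_occ[OF r_subl.hyps] by simp
      then have st: "step (Sub t' u) (subst 0 u t')" by (intro step_root root.d) simp
      have "E b (subst 0 u t) (subst 0 u t')" unfolding subst_ssub
        by (rule E_ssub, rule R1_E, rule r_subl.hyps)
      with st show ?thesis by (auto simp: x')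
    next
      fix t1 assume t: "t = ren (colf 0) t1" and o: "1 \<le> occ 0 t1" "1 \<le> occ (Suc 0) t1"
        and x': "x' = Sub (Sub t1 (lift 0 u)) u"
      from R1_ren_refl[of b "colf 0" t1 t'] r_subl.hyps obtain t1' where r: "R1 b t1 t1'" and t': "t' = ren (colf 0) t1'"
        by (auto simp: t)
      have "1 \<le> occ 0 t1'" "1 \<le> occ (Suc 0) t1'" using o R1_occ[OF r] by simp_all
      then have st: "step (Sub t' u) (Sub (Sub t1' (lift 0 u)) u)" unfolding t' by (intro step_root root_c')
      have "E b x' (Sub (Sub t1' (lift 0 u)) u)" unfolding x' using R1_E[OF R1.r_subl[OF R1.r_subl[OF r]]] .
      with st show ?thesis by blast
    qed
  next
    fix t1 assume "x' = Sub t1 u" "step t t1"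
    with r_subl.IH obtain y1 where "step t' y1" "E b t1 y1" by blast
    then show ?thesis using \<open>x' = Sub t1 u\<close> by (intro exI[of _ "Sub y1 u"]) (auto intro: step.intros E_sub E_refl)
  next
    fix u1 assume "x' = Sub t u1" "step u u1"
    then show ?thesis using r_subl.hyps
      by (intro exI[of _ "Sub t' u1"]) (auto intro: step.intros R1_E R1.intros)
  qed
next
  case (r_subr u u' t)
  from step_SubE[OF r_subr.prems] show ?case
  proof (elim disjE exE conjE)
    assume "root (Sub t u) x'"
    from root_SubE[OF this] show ?thesis
    proof (elim disjE exE conjE)
      fix t0 assume t: "t = lift 0 t0" and x': "x' = t0"
      then show ?thesis
        by (intro exI[of _ t0]) (auto simp: x' intro: step_root root_w' E_refl)
    next
      assume o: "occ 0 t = 1" and x': "x' = subst 0 u t"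
      have "E b (subst 0 u t) (subst 0 u' t)" unfolding subst_ssub
        by (rule E_ssub_pw) (auto simp: substs_def E_refl R1_E r_subr.hyps)
      moreover have "step (Sub t u') (subst 0 u' t)" using o by (intro step_root root.d)
      ultimately show ?thesis by (auto simp: x')
    next
      fix t1 assume t: "t = ren (colf 0) t1" and o: "1 \<le> occ 0 t1" "1 \<le> occ (Suc 0) t1"
        and x': "x' = Sub (Sub t1 (lift 0 u)) u"
      have st: "step (Sub t u') (Sub (Sub t1 (lift 0 u')) u')" unfolding t using o by (intro step_root root_c')
      have "E b x' (Sub (Sub t1 (lift 0 u')) u')" unfolding x' using r_subr.hyps
        by (intro E_sub E_refl E_lift R1_E)
      with st show ?thesis by blast
    qed
  next
    fix t1 assume "x' = Sub t1 u" "step t t1"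
    then show ?thesis using r_subr.hyps
      by (intro exI[of _ "Sub t1 u'"]) (auto intro: step.intros R1_E R1.intros)
  next
    fix u1 assume "x' = Sub t u1" "step u u1"
    with r_subr.IH obtain y1 where "step u' y1" "E b u1 y1" by blast
    then show ?thesis using \<open>x' = Sub t u1\<close> by (intro exI[of _ "Sub t y1"]) (auto intro: step.intros E_sub E_refl)
  qed
qed

lemma sim_s: "(R1 b)\<^sup>*\<^sup>* x y \<Longrightarrow> step x x' \<Longrightarrow> \<exists>y'. step y y' \<and> E b x' y'"
proof (induction arbitrary: x' rule: rtranclp_induct)
  case base then show ?case by (auto intro: E_refl)
next
  case (step z y)
  from step.IH[OF step.prems] obtain z' where "step z z'" "E b x' z'" by blast
  from sim[OF step.hyps(2) this(1)] obtain y' where "step y y'" "E b z' y'" by blast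
  then show ?case using \<open>E b x' z'\<close> by (blast intro: E_trans)
qed

lemma bisim_E: "strong_bisim step (E b)"
  unfolding strong_bisim_def
proof (intro allI impI)
  fix s t assume e: "E b s t"
  then have r: "(R1 b)\<^sup>*\<^sup>* s t" by (rule E_R1s)
  have 1: "\<forall>s'. step s s' \<longrightarrow> (\<exists>t'. step t t' \<and> E b s' t')" using sim_s[OF r] by blast
  have 2: "\<forall>t'. step t t' \<longrightarrow> (\<exists>s'. step s s' \<and> E b s' t')"
    using sim_s[OF R1s_sym[OF r]] E_sym by blast
  from 1 2 show "(\<forall>s'. step s s' \<longrightarrow> (\<exists>t'. step t t' \<and> E b s' t')) \<and>
      (\<forall>t'. step t t' \<longrightarrow> (\<exists>s'. step s s' \<and> E b s' t'))" by blast
qed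

theorem lemma23:
  shows "strong_bisim step eq_CS \<and> strong_bisim step eq_o"
proof -
  have 1: "eq_CS = E False" unfolding eq_CS_def E_def by simp
  have 2: "eq_o = E True" unfolding eq_o_def E_def by simp
  show ?thesis unfolding 1 2 using bisim_E by blast
qed


end
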